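(* Suppose that $\kappa$ satisfies Assumption A. Then there exists $\delta>0$ such that for any pairwise distinct points $s_1,s_2,s_3\in\mathbb{R}^2$ that are not co-linear and satisfy $\max_{i,j}|s_i-s_j|<\delta$, the Gaussian vector $(\Psi(s_1),\Psi(s_2),\Psi(s_3))$ has a non-degenerate distribution.
   Context: $\Psi:\mathbb{R}^2\to\mathbb{R}$ is a stationary centred Gaussian field with $\mathbb{E}[\Psi(s)^2]=1$ and correlation kernel $\kappa(s-t)=\mathbb{E}[\Psi(s)\Psi(t)]$. For a function $g$ and vector $v$, $g_v$ is the directional derivative. Assumption A: (1) $\kappa$ is $C^6$ at the origin; (2) $\kappa_{vv}(0)<0$ for all unit vectors $v\in S^1$. *)

theory Defs
  imports "HOL-Probability.Probability"
begin

definition dir_deriv :: "('a::real_normed_vector \<Rightarrow> real) \<Rightarrow> 'a \<Rightarrow> 'a \<Rightarrow> real" where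
  "dir_deriv g v x = frechet_derivative g (at x) v"

primrec Ck_on :: "nat \<Rightarrow> 'a::euclidean_space set \<Rightarrow> ('a \<Rightarrow> real) \<Rightarrow> bool" where
  "Ck_on 0 U f \<longleftrightarrow> continuous_on U f"
| "Ck_on (Suc k) U f \<longleftrightarrow> f differentiable_on U \<and> (\<forall>v. Ck_on k U (dir_deriv f v))"

definition assumption_A :: "(real^2 \<Rightarrow> real) \<Rightarrow> bool" where
  "assumption_A \<kappa> \<longleftrightarrow>
     (\<exists>U. open U \<and> 0 \<in> U \<and> Ck_on 6 U \<kappa>) \<and>
     (\<forall>v::real^2. norm v = 1 \<longrightarrow> dir_deriv (dir_deriv \<kappa> v) v 0 < 0)"

definition gaussian_rv :: "'a measure \<Rightarrow> ('a \<Rightarrow> real) \<Rightarrow> bool" where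
  "gaussian_rv M X \<longleftrightarrow>
     (\<exists>\<mu> \<sigma>. \<sigma> > 0 \<and> distributed M lborel X (normal_density \<mu> \<sigma>)) \<or>
     (\<exists>c. AE \<omega> in M. X \<omega> = c)"

(* Gaussian field: all values are random variables and every finite linear combination
   of values is Gaussian (i.e. all finite-dimensional distributions are jointly Gaussian). *)
definition gaussian_field :: "'a measure \<Rightarrow> ('t \<Rightarrow> 'a \<Rightarrow> real) \<Rightarrow> bool" where
  "gaussian_field M \<Psi> \<longleftrightarrow>
     (\<forall>t. \<Psi> t \<in> borel_measurable M) \<and>
     (\<forall>F c. finite F \<longrightarrow> gaussian_rv M (\<lambda>\<omega>. \<Sum>t\<in>F. c t * \<Psi> t \<omega>))"

definition covariance_matrix :: "'a measure \<Rightarrow> ('i::finite \<Rightarrow> 'a \<Rightarrow> real) \<Rightarrow> real^'i^'i" where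
  "covariance_matrix M X = (\<chi> i j. integral\<^sup>L M (\<lambda>\<omega>. X i \<omega> * X j \<omega>)
                                   - integral\<^sup>L M (X i) * integral\<^sup>L M (X j))"

(* A Gaussian random vector has a non-degenerate distribution iff its covariance matrix
   is non-singular. *)
definition nondegenerate_gaussian_vector :: "'a measure \<Rightarrow> ('i::finite \<Rightarrow> 'a \<Rightarrow> real) \<Rightarrow> bool" where
  "nondegenerate_gaussian_vector M X \<longleftrightarrow> det (covariance_matrix M X) \<noteq> 0"

end

theory Submission
  imports Defs
begin

lemma Ck_on_Suc_imp: "Ck_on (Suc k) U f \<Longrightarrow> Ck_on k U f"
proof (induction k arbitrary: f)
  case 0
  then show ?case by (simp add: differentiable_imp_continuous_on)
next
  case (Suc k)
  then show ?case by simp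
qed

lemma Ck_on_le: "Ck_on (j + k) U f \<Longrightarrow> Ck_on k U f"
proof (induction j)
  case 0
  then show ?case by simp
next
  case (Suc j)
  then show ?case by (metis Ck_on_Suc_imp add_Suc)
qed

lemma dir_deriv_has:
  fixes f :: "'a::real_normed_vector \<Rightarrow> real"
  assumes "f differentiable (at p)"
  shows "(f has_derivative (\<lambda>h. dir_deriv f h p)) (at p)"
proof -
  have "(f has_derivative frechet_derivative f (at p)) (at p)" using assms frechet_derivative_works by blast
  moreover have "(\<lambda>h. dir_deriv f h p) = frechet_derivative f (at p)" by (rule ext) (simp add: dir_deriv_def)
  ultimately show ?thesis by simp
qed

lemma dir_deriv_linear:
  fixes f :: "'a::real_normed_vector \<Rightarrow> real"
  assumes "f differentiable (at p)"
  shows "dir_deriv f (a + b) p = dir_deriv f a p + dir_deriv f b p"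
    "dir_deriv f (c *\<^sub>R a) p = c * dir_deriv f a p"
  using linear_frechet_derivative[OF assms] unfolding dir_deriv_def
  by (simp_all add: linear_add linear_scale)

lemma ray_deriv:
  fixes f :: "'a::real_normed_vector \<Rightarrow> real"
  assumes "f differentiable (at (r *\<^sub>R z))"
  shows "((\<lambda>r. f (r *\<^sub>R z)) has_real_derivative dir_deriv f z (r *\<^sub>R z)) (at r)"
proof -
  have 1: "((\<lambda>r. r *\<^sub>R z) has_derivative (\<lambda>h. h *\<^sub>R z)) (at r)"
    by (rule bounded_linear_imp_has_derivative[OF bounded_linear_scaleR_left])
  have 2: "(f has_derivative (\<lambda>h. dir_deriv f h (r *\<^sub>R z))) (at (r *\<^sub>R z))"
    by (rule dir_deriv_has[OF assms])
  have "((\<lambda>r. f (r *\<^sub>R z)) has_derivative (\<lambda>h. dir_deriv f (h *\<^sub>R z) (r *\<^sub>R z))) (at r)"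
    using has_derivative_compose[OF 1 2] .
  moreover have "(\<lambda>h. dir_deriv f (h *\<^sub>R z) (r *\<^sub>R z)) = (\<lambda>h. dir_deriv f z (r *\<^sub>R z) * h)"
    using dir_deriv_linear(2)[OF assms] by (auto simp: mult.commute)
  ultimately show ?thesis unfolding has_field_derivative_def by simp
qed

lemma even_deriv_zero:
  fixes f :: "'a::real_normed_vector \<Rightarrow> real"
  assumes d: "f differentiable (at 0)" and ev: "\<And>z. f (-z) = f z"
  shows "dir_deriv f z 0 = 0"
proof -
  define D where "D = dir_deriv f z 0"
  have h: "((\<lambda>r. f (r *\<^sub>R z)) has_real_derivative D) (at 0)"
    using ray_deriv[of f 0 z] d unfolding D_def by simp
  have "((\<lambda>r. f ((- r) *\<^sub>R z)) has_real_derivative - D) (at 0)"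
    using h DERIV_mirror[where f="\<lambda>r. f (r *\<^sub>R z)" and x=0 and y=D] by simp
  moreover have "(\<lambda>r. f ((- r) *\<^sub>R z)) = (\<lambda>r. f (r *\<^sub>R z))"
    using ev by (metis scaleR_minus_left)
  ultimately have "((\<lambda>r. f (r *\<^sub>R z)) has_real_derivative - D) (at 0)" by simp
  then have "D = - D" using h DERIV_unique by blast
  then show ?thesis unfolding D_def by simp
qed

lemma vec2_decomp: "z = z$1 *\<^sub>R axis 1 1 + z$2 *\<^sub>R axis 2 (1::real)" for z :: "real^2"
  by (simp add: vec_eq_iff forall_2 axis_def)

lemma dir_deriv_decomp:
  fixes f :: "real^2 \<Rightarrow> real"
  assumes "f differentiable (at p)"
  shows "dir_deriv f z p = z$1 * dir_deriv f (axis 1 1) p + z$2 * dir_deriv f (axis 2 1) p"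
  apply (subst vec2_decomp[of z])
  using dir_deriv_linear[OF assms] by simp

definition M2 :: "(real^2 \<Rightarrow> real) \<Rightarrow> 2 \<Rightarrow> 2 \<Rightarrow> real^2 \<Rightarrow> real" where
  "M2 f i j p = dir_deriv (dir_deriv f (axis i 1)) (axis j 1) p"

lemma second_decomp:
  fixes f :: "real^2 \<Rightarrow> real"
  assumes U: "open U" "p \<in> U" and d1: "f differentiable_on U"
    and d2: "\<And>v. dir_deriv f v differentiable_on U"
  shows "dir_deriv (dir_deriv f z) w p =
     z$1*w$1*M2 f 1 1 p + z$1*w$2*M2 f 1 2 p + z$2*w$1*M2 f 2 1 p + z$2*w$2*M2 f 2 2 p"
proof -
  define g1 where "g1 = dir_deriv f (axis 1 1)"
  define g2 where "g2 = dir_deriv f (axis 2 1)"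
  have dat: "\<And>q v. q \<in> U \<Longrightarrow> dir_deriv f v differentiable (at q)"
    using d2 U(1) differentiable_on_eq_differentiable_at by blast
  have fat: "\<And>q. q \<in> U \<Longrightarrow> f differentiable (at q)"
    using d1 U(1) differentiable_on_eq_differentiable_at by blast
  have eq: "z$1 * g1 q + z$2 * g2 q = dir_deriv f z q" if "q \<in> U" for q
    unfolding g1_def g2_def by (rule sym[OF dir_deriv_decomp[OF fat[OF that], of z]])
  have g1d: "g1 differentiable (at p)" and g2d: "g2 differentiable (at p)"
    unfolding g1_def g2_def using dat[OF U(2)] by auto
  have h: "((\<lambda>q. z$1 * g1 q + z$2 * g2 q) has_derivative
       (\<lambda>h. z$1 * dir_deriv g1 h p + z$2 * dir_deriv g2 h p)) (at p)"
    by (intro has_derivative_add has_derivative_mult_right dir_deriv_has g1d g2d)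
  have h2: "(dir_deriv f z has_derivative
       (\<lambda>h. z$1 * dir_deriv g1 h p + z$2 * dir_deriv g2 h p)) (at p)"
    by (rule has_derivative_transform_within_open[OF h U(1) U(2)]) (rule eq)
  have fd: "frechet_derivative (dir_deriv f z) (at p) = (\<lambda>h. z$1 * dir_deriv g1 h p + z$2 * dir_deriv g2 h p)"
    using frechet_derivative_at[OF h2] by simp
  have "dir_deriv (dir_deriv f z) w p = frechet_derivative (dir_deriv f z) (at p) w"
    by (simp add: dir_deriv_def)
  also have "\<dots> = z$1 * dir_deriv g1 w p + z$2 * dir_deriv g2 w p" unfolding fd by simp
  also have "\<dots> = z$1*w$1*M2 f 1 1 p + z$1*w$2*M2 f 1 2 p + z$2*w$1*M2 f 2 1 p + z$2*w$2*M2 f 2 2 p"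
    unfolding M2_def using dir_deriv_decomp[OF g1d, of w] dir_deriv_decomp[OF g2d, of w]
    unfolding g1_def g2_def by (simp add: algebra_simps)
  finally show ?thesis .
qed

lemma cont_at_small:
  fixes g :: "real^2 \<Rightarrow> real"
  assumes "continuous_on U g" "open U" "0 \<in> U" "e > 0"
  shows "\<exists>d>0. \<forall>p. norm p < d \<longrightarrow> \<bar>g p - g 0\<bar> < e"
proof -
  have "isCont g 0" using assms continuous_on_eq_continuous_at by blast
  then obtain d where "d > 0" "\<forall>p. dist p 0 < d \<longrightarrow> dist (g p) (g 0) < e"
    using assms(4) unfolding continuous_at_eps_delta by blast
  then show ?thesis by (auto simp: dist_norm)
qed

lemma comp_le_norm2: "\<bar>z$i\<bar> \<le> norm z" for z :: "real^2"
  by (rule component_le_norm_cart)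

lemma taylor2:
  fixes k :: "real^2 \<Rightarrow> real"
  assumes U: "open U" "0 \<in> U" and C: "Ck_on 2 U k" and ev: "\<And>z. k (-z) = k z"
    and k0: "k 0 = 1" and eta: "\<eta> > 0"
  shows "\<exists>r>0. \<forall>z. norm z < r \<longrightarrow> \<bar>k z - 1 - (z$1*z$1*M2 k 1 1 0 + z$1*z$2*M2 k 1 2 0
            + z$2*z$1*M2 k 2 1 0 + z$2*z$2*M2 k 2 2 0)/2\<bar> \<le> \<eta> * (norm z)^2"
proof -
  have d1: "k differentiable_on U" and d2: "\<And>v. dir_deriv k v differentiable_on U"
    and cc: "\<And>v w. continuous_on U (dir_deriv (dir_deriv k v) w)"
    using C by (simp_all add: numeral_2_eq_2)
  have kat: "\<And>q. q \<in> U \<Longrightarrow> k differentiable (at q)"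
    using d1 U(1) differentiable_on_eq_differentiable_at by blast
  have dat: "\<And>q v. q \<in> U \<Longrightarrow> dir_deriv k v differentiable (at q)"
    using d2 U(1) differentiable_on_eq_differentiable_at by blast
  have Mc: "\<exists>d>0. \<forall>p. norm p < d \<longrightarrow> \<bar>M2 k i j p - M2 k i j 0\<bar> < \<eta>/2" for i j
    unfolding M2_def by (rule cont_at_small[OF cc U(1) U(2)]) (use eta in simp)
  obtain r11 where r11: "r11 > 0" "\<forall>p. norm p < r11 \<longrightarrow> \<bar>M2 k 1 1 p - M2 k 1 1 0\<bar> < \<eta>/2" using Mc by blast
  obtain r12 where r12: "r12 > 0" "\<forall>p. norm p < r12 \<longrightarrow> \<bar>M2 k 1 2 p - M2 k 1 2 0\<bar> < \<eta>/2" using Mc by blast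
  obtain r21 where r21: "r21 > 0" "\<forall>p. norm p < r21 \<longrightarrow> \<bar>M2 k 2 1 p - M2 k 2 1 0\<bar> < \<eta>/2" using Mc by blast
  obtain r22 where r22: "r22 > 0" "\<forall>p. norm p < r22 \<longrightarrow> \<bar>M2 k 2 2 p - M2 k 2 2 0\<bar> < \<eta>/2" using Mc by blast
  obtain r0 where r0: "r0 > 0" "ball 0 r0 \<subseteq> U" using U open_contains_ball by blast
  define r where "r = min r0 (min (min r11 r12) (min r21 r22))"
  have rpos: "r > 0" unfolding r_def using r0 r11 r12 r21 r22 by simp
  show ?thesis
  proof (intro exI[of _ r] conjI allI impI rpos)
    fix z :: "real^2" assume zr: "norm z < r"
    have inU: "t *\<^sub>R z \<in> U" if "0 \<le> t" "t \<le> 1" for t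
    proof -
      have "norm (t *\<^sub>R z) \<le> norm z" using that by (simp add: mult_left_le_one_le)
      then have "norm (t *\<^sub>R z) < r0" using zr unfolding r_def by linarith
      then show ?thesis using r0(2) by auto
    qed
    define diff where "diff = (\<lambda>(m::nat) (t::real). if m = 0 then k (t *\<^sub>R z) else if m = 1 then dir_deriv k z (t *\<^sub>R z)
                                   else dir_deriv (dir_deriv k z) z (t *\<^sub>R z))"
    have D: "\<forall>m t. m < 2 \<and> 0 \<le> t \<and> t \<le> 1 \<longrightarrow> DERIV (diff m) t :> diff (Suc m) t"
    proof (intro allI impI)
      fix m :: nat and t :: real assume h: "m < 2 \<and> 0 \<le> t \<and> t \<le> 1"
      then have tU: "t *\<^sub>R z \<in> U" using inU by blast
      show "DERIV (diff m) t :> diff (Suc m) t"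
      proof (cases "m = 0")
        case True
        then show ?thesis unfolding diff_def using ray_deriv[OF kat[OF tU]] by simp
      next
        case False
        then have "m = 1" using h by simp
        then show ?thesis unfolding diff_def using ray_deriv[OF dat[OF tU]] by simp
      qed
    qed
    obtain t where t: "0 < t" "t < 1"
      and mac: "diff 0 1 = (\<Sum>m<2. diff m 0 / fact m * 1 ^ m) + diff 2 t / fact 2 * 1 ^ 2"
      using Maclaurin[of 1 2 diff "diff 0", OF _ _ refl D] by auto
    have e0: "diff 0 1 = k z" unfolding diff_def by simp
    have e1: "diff 0 0 = 1" unfolding diff_def using k0 by simp
    have e2: "diff 1 0 = 0" unfolding diff_def using even_deriv_zero[OF kat[OF U(2)] ev] by simp
    define p where "p = t *\<^sub>R z"
    have pU: "p \<in> U" unfolding p_def using inU t by simp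
    have e3: "diff 2 t = z$1*z$1*M2 k 1 1 p + z$1*z$2*M2 k 1 2 p + z$2*z$1*M2 k 2 1 p + z$2*z$2*M2 k 2 2 p"
      unfolding diff_def p_def[symmetric] using second_decomp[OF U(1) pU d1 d2, of z z] by simp
    have sum2: "(\<Sum>m<2. diff m 0 / fact m * 1 ^ m) = diff 0 0 + diff 1 0"
      by (simp add: numeral_2_eq_2)
    have kz: "k z = 1 + diff 2 t / 2" using mac e0 e1 e2 sum2 by simp
    have pn: "norm p < r" unfolding p_def using t zr
      by (simp add: mult_left_le_one_le) (smt (verit) mult_left_le_one_le norm_ge_zero)
    have b11: "\<bar>M2 k 1 1 p - M2 k 1 1 0\<bar> \<le> \<eta>/2" using r11 pn unfolding r_def by auto
    have b12: "\<bar>M2 k 1 2 p - M2 k 1 2 0\<bar> \<le> \<eta>/2" using r12 pn unfolding r_def by auto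
    have b21: "\<bar>M2 k 2 1 p - M2 k 2 1 0\<bar> \<le> \<eta>/2" using r21 pn unfolding r_def by auto
    have b22: "\<bar>M2 k 2 2 p - M2 k 2 2 0\<bar> \<le> \<eta>/2" using r22 pn unfolding r_def by auto
    have zz: "\<bar>z$i * z$j\<bar> \<le> (norm z)^2" for i j
    proof -
      have "\<bar>z$i * z$j\<bar> = \<bar>z$i\<bar> * \<bar>z$j\<bar>" by (simp add: abs_mult)
      also have "\<dots> \<le> norm z * norm z" by (intro mult_mono comp_le_norm2) auto
      finally show ?thesis by (simp add: power2_eq_square)
    qed
    have tb: "\<bar>z$i * z$j * (M2 k i' j' p - M2 k i' j' 0)\<bar> \<le> (norm z)^2 * (\<eta>/2)"
      if "\<bar>M2 k i' j' p - M2 k i' j' 0\<bar> \<le> \<eta>/2" for i j i' j'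
    proof -
      have "\<bar>z$i * z$j * (M2 k i' j' p - M2 k i' j' 0)\<bar> = \<bar>z$i * z$j\<bar> * \<bar>M2 k i' j' p - M2 k i' j' 0\<bar>"
        by (simp add: abs_mult)
      also have "\<dots> \<le> (norm z)^2 * (\<eta>/2)" by (intro mult_mono zz that) auto
      finally show ?thesis .
    qed
    define Y where "Y = z$1*z$1*(M2 k 1 1 p - M2 k 1 1 0) + z$1*z$2*(M2 k 1 2 p - M2 k 1 2 0)
          + z$2*z$1*(M2 k 2 1 p - M2 k 2 1 0) + z$2*z$2*(M2 k 2 2 p - M2 k 2 2 0)"
    have E: "k z - 1 - (z$1*z$1*M2 k 1 1 0 + z$1*z$2*M2 k 1 2 0 + z$2*z$1*M2 k 2 1 0 + z$2*z$2*M2 k 2 2 0)/2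
        = Y/2"
      unfolding kz e3 Y_def by (simp add: field_simps)
    have conv: "(norm z)^2 * (\<eta>/2) = \<eta>*(norm z)^2/2" by simp
    have B: "\<bar>Y\<bar> \<le> 2 * (\<eta> * (norm z)^2)"
      using tb[OF b11, of 1 1] tb[OF b12, of 1 2] tb[OF b21, of 2 1] tb[OF b22, of 2 2] unfolding Y_def conv
      by linarith
    have "\<bar>Y/2\<bar> = \<bar>Y\<bar>/2" by simp
    then show "\<bar>k z - 1 - (z$1*z$1*M2 k 1 1 0 + z$1*z$2*M2 k 1 2 0
            + z$2*z$1*M2 k 2 1 0 + z$2*z$2*M2 k 2 2 0)/2\<bar> \<le> \<eta> * (norm z)^2"
      unfolding E using B by linarith
  qed
qed



definition cosset :: "('a::real_vector \<Rightarrow> real) \<Rightarrow> 'a set" where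
  "cosset k = {w. \<forall>t. k (t + w) + k (t - w) = 2 * k w * k t}"

lemma Dpair:
  fixes k :: "'a::real_vector \<Rightarrow> real"
  assumes A: "\<And>t. c1*k t + c2*k(t+x) + c3*k(t+y) = 0"
    and B: "\<And>t. c1*k t + c2*k(t-x) + c3*k(t-y) = 0"
    and ev: "\<And>z. k (-z) = k z" and k0: "k 0 = 1" and c: "c1*c2 \<noteq> 0"
  shows "x \<in> cosset k"
proof -
  have E: "c1*c2*(k(t+x)+k(t-x)) = (c3^2-c1^2-c2^2)*k t" for t
  proof -
    have e: "t+y-x = t-x+y" "t-x+x = t" "t+y-y = t" by (simp_all add: algebra_simps)
    have b1: "c1*k(t+y) + c2*k(t-x+y) + c3*k t = 0" using B[of "t+y"] unfolding e .
    have a1: "c1*k (t-x) + c2*k t + c3*k(t-x+y) = 0" using A[of "t-x"] unfolding e .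
    have a0: "c1*k t + c2*k(t+x) + c3*k(t+y) = 0" using A[of t] .
    have "c3*(c1*k(t+y) + c2*k(t-x+y) + c3*k t) - c1*(c1*k t + c2*k(t+x) + c3*k(t+y))
        - c2*(c1*k (t-x) + c2*k t + c3*k(t-x+y)) = (c3^2-c1^2-c2^2)*k t - c1*c2*(k(t+x)+k(t-x))"
      by (simp add: power2_eq_square algebra_simps)
    then show ?thesis using a0 a1 b1 by simp
  qed
  have H: "c3^2-c1^2-c2^2 = c1*c2*(2*k x)" using E[of 0] ev[of x] k0 by simp
  have "c1*c2*(k(t+x)+k(t-x)) = c1*c2*(2*k x*k t)" for t
  proof -
    have "c1*c2*(k(t+x)+k(t-x)) = (c1*c2*(2*k x))*k t" using E[of t] unfolding H .
    then show ?thesis by (simp add: mult_ac)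
  qed
  then show ?thesis using c unfolding cosset_def by simp
qed

lemma cosset_0: "k 0 = 1 \<Longrightarrow> 0 \<in> cosset k"
  unfolding cosset_def by simp

lemma cosset_neg:
  assumes ev: "\<And>z. k (-z) = k z" and w: "w \<in> cosset k"
  shows "-w \<in> cosset k"
proof -
  have "k (t + -w) + k (t - -w) = 2 * k (-w) * k t" for t
    using w[unfolded cosset_def] ev[of w] by (auto simp: algebra_simps)
  then show ?thesis unfolding cosset_def by blast
qed

lemma cosset_add:
  assumes u: "u \<in> cosset k" and v: "v \<in> cosset k" and uv: "u - v \<in> cosset k"
    and ev: "\<And>z. k (-z) = k z"
  shows "u + v \<in> cosset k"
proof -
  have U: "\<And>t. k (t + u) + k (t - u) = 2 * k u * k t" using u unfolding cosset_def by blast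
  have V: "\<And>t. k (t + v) + k (t - v) = 2 * k v * k t" using v unfolding cosset_def by blast
  have W: "\<And>t. k (t + (u-v)) + k (t - (u-v)) = 2 * k (u-v) * k t" using uv unfolding cosset_def by blast
  have main: "k (t + (u+v)) + k (t - (u+v)) = (4 * k u * k v - 2 * k (u-v)) * k t" for t
  proof -
    have 1: "k (t + v + u) + k (t + v - u) = 2 * k u * k (t+v)" using U[of "t+v"] .
    have 2: "k (t - v + u) + k (t - v - u) = 2 * k u * k (t-v)" using U[of "t-v"] .
    have 3: "k (t + (u-v)) + k (t - (u-v)) = 2 * k (u-v) * k t" using W[of t] .
    have e1: "t + v + u = t + (u+v)" "t - v - u = t - (u+v)" "t + v - u = t - (u-v)" "t - v + u = t + (u-v)"
      by (simp_all add: algebra_simps)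
    have s: "2 * k u * k (t+v) + 2 * k u * k (t-v) = 4 * k u * k v * k t"
    proof -
      have "2 * k u * k (t+v) + 2 * k u * k (t-v) = 2 * k u * (k (t+v) + k (t-v))" by (simp add: algebra_simps)
      also have "\<dots> = 2 * k u * (2 * k v * k t)" using V[of t] by simp
      finally show ?thesis by simp
    qed
    have r: "(4 * k u * k v - 2 * k (u-v)) * k t = 4 * k u * k v * k t - 2 * k (u-v) * k t"
      by (simp add: algebra_simps)
    show ?thesis using 1 2 3 s unfolding e1 r by linarith
  qed
  have "k (u + v) + k (u - v) = 2 * k v * k u" using V[of u] .
  then have "4 * k u * k v - 2 * k (u-v) = 2 * k (u+v)" by (simp add: algebra_simps)
  then show ?thesis using main unfolding cosset_def by (simp add: algebra_simps)
qed

lemma cosset_pos: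
  assumes a: "a \<in> cosset k" and b: "b \<in> cosset k" and ab: "a - b \<in> cosset k"
    and ev: "\<And>z. k (-z) = k z"
  shows "a + real j *\<^sub>R b \<in> cosset k \<and> a + real (Suc j) *\<^sub>R b \<in> cosset k"
proof (induction j)
  case 0
  have "a + b \<in> cosset k" using cosset_add[OF a b ab ev] .
  then show ?case using a by simp
next
  case (Suc j)
  have e: "a + real (Suc j) *\<^sub>R b - b = a + real j *\<^sub>R b"
    by (simp add: algebra_simps)
  have e2: "a + real (Suc j) *\<^sub>R b + b = a + real (Suc (Suc j)) *\<^sub>R b"
    by (simp add: algebra_simps scaleR_2)
  have h1: "a + real (Suc j) *\<^sub>R b \<in> cosset k" using Suc by blast
  have h2: "a + real (Suc j) *\<^sub>R b - b \<in> cosset k" unfolding e using Suc by blast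
  have "a + real (Suc j) *\<^sub>R b + b \<in> cosset k"
    by (rule cosset_add[OF h1 b h2 ev])
  then show ?case using h1 unfolding e2 by blast
qed

lemma cosset_line:
  assumes a: "a \<in> cosset k" and b: "b \<in> cosset k" and ab: "a - b \<in> cosset k"
    and ev: "\<And>z. k (-z) = k z"
  shows "a + of_int n *\<^sub>R b \<in> cosset k"
proof (cases "n \<ge> 0")
  case True
  then obtain j where j: "n = int j" by (metis nonneg_int_cases)
  have "a + real j *\<^sub>R b \<in> cosset k" using cosset_pos[OF a b ab ev, of j] by blast
  then show ?thesis using j by simp
next
  case False
  then obtain j where j: "n = - int j" by (metis nonpos_int_cases linear)
  have ab2: "a - (-b) \<in> cosset k" using cosset_add[OF a b ab ev] by simp
  have "a + real j *\<^sub>R (-b) \<in> cosset k" using cosset_pos[OF a cosset_neg[OF ev b] ab2 ev, of j] by blast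
  then show ?thesis using j by simp
qed

lemma cosset_lattice:
  fixes k :: "'a::real_vector \<Rightarrow> real"
  assumes x: "x \<in> cosset k" and y: "y \<in> cosset k" and yx: "y - x \<in> cosset k"
    and ev: "\<And>z. k (-z) = k z" and k0: "k 0 = 1"
  shows "of_int n *\<^sub>R x + of_int m *\<^sub>R y \<in> cosset k"
proof -
  note neg = cosset_neg[of k, OF ev]
  have z: "0 \<in> cosset k" using cosset_0[of k, OF k0] .
  have zy: "0 - y \<in> cosset k" using neg[OF y] by simp
  have my: "0 + of_int m *\<^sub>R y \<in> cosset k"
    by (rule cosset_line[OF z y zy ev])
  have xy: "x - y \<in> cosset k" using neg[OF yx] by simp
  have "x + y \<in> cosset k" using cosset_add[OF x y xy ev] .
  then have "- (x + y) \<in> cosset k" by (rule neg)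
  moreover have "- (x + y) = -x - y" by simp
  ultimately have xy2: "-x - y \<in> cosset k" by simp
  have mx: "-x + of_int m *\<^sub>R y \<in> cosset k"
    by (rule cosset_line[OF neg[OF x] y xy2 ev])
  have e: "0 + of_int m *\<^sub>R y - x = -x + of_int m *\<^sub>R y" by simp
  have mx2: "0 + of_int m *\<^sub>R y - x \<in> cosset k" unfolding e by (rule mx)
  have "0 + of_int m *\<^sub>R y + of_int n *\<^sub>R x \<in> cosset k"
    by (rule cosset_line[OF my x mx2 ev])
  moreover have "0 + of_int m *\<^sub>R y + of_int n *\<^sub>R x = of_int n *\<^sub>R x + of_int m *\<^sub>R y"
    by simp
  ultimately show ?thesis by (simp add: add.commute)
qed

lemma cos_identity:
  fixes k :: "'a::real_vector \<Rightarrow> real"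
  assumes u: "u \<in> cosset k" and v: "v \<in> cosset k" and uv: "u + v \<in> cosset k"
    and ev: "\<And>z. k (-z) = k z" and k0: "k 0 = 1"
  shows "(k (u+v) - k u * k v)^2 = (1 - (k u)^2) * (1 - (k v)^2)"
proof -
  have U: "\<And>t. k (t + u) + k (t - u) = 2 * k u * k t" using u unfolding cosset_def by blast
  have V: "\<And>t. k (t + v) + k (t - v) = 2 * k v * k t" using v unfolding cosset_def by blast
  have W: "\<And>t. k (t + (u+v)) + k (t - (u+v)) = 2 * k (u+v) * k t" using uv unfolding cosset_def by blast
  have 1: "k (u + v) + k (u - v) = 2 * k v * k u" using V[of u] .
  have e2: "u - v + (u+v) = 2 *\<^sub>R u" "u - v - (u+v) = - (2 *\<^sub>R v)"
    by (simp_all add: algebra_simps scaleR_2)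
  have 2: "k (2 *\<^sub>R u) + k (2 *\<^sub>R v) = 2 * k (u+v) * k (u-v)"
    using W[of "u-v"] unfolding e2 ev .
  have e3: "u + u = 2 *\<^sub>R u" "v + v = 2 *\<^sub>R v" by (simp_all add: scaleR_2)
  have 3: "k (2 *\<^sub>R u) + 1 = 2 * k u * k u" using U[of u] k0 unfolding e3 by simp
  have 4: "k (2 *\<^sub>R v) + 1 = 2 * k v * k v" using V[of v] k0 unfolding e3 by simp
  define a where "a = k u"
  define b where "b = k v"
  define c where "c = k (u+v)"
  define c' where "c' = k (u-v)"
  have h1: "c' = 2*a*b - c" using 1 unfolding a_def b_def c_def c'_def by (simp add: algebra_simps)
  have h2: "2*a*a - 1 + (2*b*b - 1) = 2*c*c'" using 2 3 4 unfolding a_def b_def c_def c'_def by linarith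
  have "(c - a*b)^2 = (1 - a^2) * (1 - b^2)"
  proof -
    have "2*a*a - 1 + (2*b*b - 1) = 2*c*(2*a*b - c)" using h1 h2 by simp
    then have "c*c - 2*a*b*c = 1 - a*a - b*b" by (simp add: algebra_simps)
    then show ?thesis by (simp add: power2_eq_square algebra_simps)
  qed
  then show ?thesis unfolding a_def b_def c_def .
qed



definition det2 :: "real^2 \<Rightarrow> real^2 \<Rightarrow> real" where
  "det2 a b = a$1 * b$2 - a$2 * b$1"

lemma inner2: "a \<bullet> b = a$1*b$1 + a$2*b$2" for a b :: "real^2"
  by (simp add: inner_vec_def sum_2)

lemma norm2: "(norm a)^2 = a$1^2 + a$2^2" for a :: "real^2"
  by (simp only: power2_norm_eq_inner inner2) (simp add: power2_eq_square)

lemma lagrange2: "(det2 a b)^2 + (a \<bullet> b)^2 = (norm a)^2 * (norm b)^2"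
  by (simp only: norm2 det2_def inner2) (simp add: power2_eq_square algebra_simps)

lemma det2_bound: "\<bar>det2 a b\<bar> \<le> norm a * norm b"
proof -
  have "(det2 a b)^2 \<le> (norm a * norm b)^2"
    using lagrange2[of a b] zero_le_power2[of "a \<bullet> b"] unfolding power_mult_distrib by linarith
  then have "\<bar>det2 a b\<bar> \<le> \<bar>norm a * norm b\<bar>" using abs_le_square_iff by blast
  then show ?thesis by simp
qed

lemma det2_lin:
  "det2 a (c *\<^sub>R b) = c * det2 a b" "det2 (c *\<^sub>R a) b = c * det2 a b"
  "det2 a (b + b') = det2 a b + det2 a b'" "det2 (a + a') b = det2 a b + det2 a' b"
  "det2 a (b - b') = det2 a b - det2 a b'" "det2 a a = 0"
  by (simp_all add: det2_def algebra_simps)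

lemma det2_dep:
  assumes "b \<noteq> 0" "det2 b x = 0" "det2 b y = 0"
  shows "det2 x y = 0"
proof -
  have "(norm b)^2 * det2 x y = det2 b y * (b \<bullet> x) - det2 b x * (b \<bullet> y)"
    by (simp only: norm2 det2_def inner2) (simp add: power2_eq_square algebra_simps)
  then show ?thesis using assms by simp
qed

definition lat :: "real^2 \<Rightarrow> real^2 \<Rightarrow> (real^2) set" where
  "lat x y = {of_int n *\<^sub>R x + of_int m *\<^sub>R y | n m. True}"

lemma lat_add: "a \<in> lat x y \<Longrightarrow> b \<in> lat x y \<Longrightarrow> a + b \<in> lat x y"
proof -
  assume "a \<in> lat x y" "b \<in> lat x y"
  then obtain n m n' m' where "a = of_int n *\<^sub>R x + of_int m *\<^sub>R y" "b = of_int n' *\<^sub>R x + of_int m' *\<^sub>R y"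
    unfolding lat_def by blast
  then have "a + b = of_int (n+n') *\<^sub>R x + of_int (m+m') *\<^sub>R y" by (simp add: algebra_simps)
  then show ?thesis unfolding lat_def by blast
qed

lemma lat_scale: "a \<in> lat x y \<Longrightarrow> of_int j *\<^sub>R a \<in> lat x y"
proof -
  assume "a \<in> lat x y"
  then obtain n m where "a = of_int n *\<^sub>R x + of_int m *\<^sub>R y"
    unfolding lat_def by blast
  then have "of_int j *\<^sub>R a = of_int (j*n) *\<^sub>R x + of_int (j*m) *\<^sub>R y" by (simp add: algebra_simps)
  then show ?thesis unfolding lat_def by blast
qed

lemma lat_diff: "a \<in> lat x y \<Longrightarrow> b \<in> lat x y \<Longrightarrow> a - b \<in> lat x y"
  using lat_add[of a x y "of_int (-1) *\<^sub>R b"] lat_scale[of b x y "-1"] by simp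

lemma lat_x: "x \<in> lat x y" and lat_y: "y \<in> lat x y"
  unfolding lat_def by (rule CollectI, rule exI[of _ 1], rule exI[of _ 0], simp)
    (rule CollectI, rule exI[of _ 0], rule exI[of _ 1], simp)

lemma lat_finite:
  assumes D: "det2 x y \<noteq> 0"
  shows "finite {z \<in> lat x y. norm z \<le> r}"
proof -
  define N where "N = ceiling (2 * r * (norm x + norm y) / \<bar>det2 x y\<bar>)"
  have sub: "{z \<in> lat x y. norm z \<le> r} \<subseteq> (\<lambda>(n,m). of_int n *\<^sub>R x + of_int m *\<^sub>R y) ` ({-N..N} \<times> {-N..N})"
  proof
    fix z assume z: "z \<in> {z \<in> lat x y. norm z \<le> r}"
    then obtain n m where zd: "z = of_int n *\<^sub>R x + of_int m *\<^sub>R y" and zr: "norm z \<le> r"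
      unfolding lat_def by auto
    have Dp: "0 < \<bar>det2 x y\<bar>" using D by simp
    have r0: "0 \<le> r" using zr norm_ge_zero[of z] by linarith
    have n1: "det2 z y = of_int n * det2 x y" unfolding zd by (simp add: det2_lin det2_def algebra_simps)
    have m1: "det2 x z = of_int m * det2 x y" unfolding zd by (simp add: det2_lin det2_def algebra_simps)
    have "\<bar>of_int n\<bar> * \<bar>det2 x y\<bar> \<le> r * (norm x + norm y)"
    proof -
      have "\<bar>of_int n\<bar> * \<bar>det2 x y\<bar> = \<bar>det2 z y\<bar>" using n1 by (simp add: abs_mult)
      also have "\<dots> \<le> norm z * norm y" by (rule det2_bound)
      also have "\<dots> \<le> r * (norm x + norm y)" using zr r0
        by (intro mult_mono) auto
      finally show ?thesis .
    qed
    then have "\<bar>real_of_int n\<bar> \<le> r * (norm x + norm y) / \<bar>det2 x y\<bar>" using Dp by (simp add: field_simps)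
    also have "\<dots> \<le> 2 * r * (norm x + norm y) / \<bar>det2 x y\<bar>"
      using Dp r0 by (intro divide_right_mono) auto
    finally have nN: "\<bar>n\<bar> \<le> N" unfolding N_def by linarith
    have "\<bar>of_int m\<bar> * \<bar>det2 x y\<bar> \<le> r * (norm x + norm y)"
    proof -
      have "\<bar>of_int m\<bar> * \<bar>det2 x y\<bar> = \<bar>det2 x z\<bar>" using m1 by (simp add: abs_mult)
      also have "\<dots> \<le> norm x * norm z" by (rule det2_bound)
      also have "\<dots> \<le> norm x * r" using zr by (intro mult_left_mono) auto
      also have "\<dots> \<le> r * (norm x + norm y)" using r0 by (simp add: algebra_simps)
      finally show ?thesis .
    qed
    then have "\<bar>real_of_int m\<bar> \<le> r * (norm x + norm y) / \<bar>det2 x y\<bar>" using Dp by (simp add: field_simps)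
    also have "\<dots> \<le> 2 * r * (norm x + norm y) / \<bar>det2 x y\<bar>"
      using Dp r0 by (intro divide_right_mono) auto
    finally have mN: "\<bar>m\<bar> \<le> N" unfolding N_def by linarith
    show "z \<in> (\<lambda>(n,m). of_int n *\<^sub>R x + of_int m *\<^sub>R y) ` ({-N..N} \<times> {-N..N})"
      using nN mN zd by (auto intro!: image_eqI[of _ _ "(n,m)"])
  qed
  show ?thesis by (rule finite_subset[OF sub]) auto
qed

lemma lat_shortest:
  assumes D: "det2 x y \<noteq> 0"
  obtains b where "b \<in> lat x y" "b \<noteq> 0" "\<And>z. z \<in> lat x y \<Longrightarrow> z \<noteq> 0 \<Longrightarrow> norm b \<le> norm z"
proof -
  define P where "P = {z \<in> lat x y. norm z \<le> norm x} - {0}"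
  have fin: "finite P" unfolding P_def using lat_finite[OF D, of "norm x"] by simp
  have x0: "x \<noteq> 0" using D by (auto simp: det2_def)
  have xP: "x \<in> P" unfolding P_def using lat_x x0 by auto
  then have ne: "norm ` P \<noteq> {}" by auto
  have fin2: "finite (norm ` P)" using fin by simp
  obtain b where bP: "b \<in> P" and bm: "norm b = Min (norm ` P)"
    using Min_in[OF fin2 ne] by auto
  show ?thesis
  proof
    show "b \<in> lat x y" "b \<noteq> 0" using bP unfolding P_def by auto
    fix z assume z: "z \<in> lat x y" "z \<noteq> 0"
    show "norm b \<le> norm z"
    proof (cases "norm z \<le> norm x")
      case True
      then have "z \<in> P" unfolding P_def using z by auto
      then show ?thesis unfolding bm using fin2 by simp
    next
      case False
      have "norm b \<le> norm x" unfolding bm using fin2 xP by simp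
      then show ?thesis using False by simp
    qed
  qed
qed

lemma lat_good_pair:
  assumes D: "det2 x y \<noteq> 0"
  shows "\<exists>u v. u \<in> lat x y \<and> v \<in> lat x y \<and> v \<noteq> 0 \<and> norm u \<le> norm v \<and>
           (norm v)^2 \<le> 5/4 * max ((norm x)^2) ((norm y)^2) \<and> 3/16 * (norm v)^4 \<le> (det2 u v)^2"
proof -
  obtain b where bL: "b \<in> lat x y" and b0: "b \<noteq> 0"
    and bmin: "\<And>z. z \<in> lat x y \<Longrightarrow> z \<noteq> 0 \<Longrightarrow> norm b \<le> norm z"
    using lat_shortest[OF D] by blast
  obtain w where wL: "w \<in> lat x y" and wd: "det2 b w \<noteq> 0"
      and wn: "(norm w)^2 \<le> max ((norm x)^2) ((norm y)^2)"
  proof (cases "det2 b x = 0")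
    case True
    then have "det2 b y \<noteq> 0" using det2_dep[OF b0] D by blast
    then show ?thesis using that[of y] lat_y by simp
  next
    case False
    then show ?thesis using that[of x] lat_x by simp
  qed
  have w0: "w \<noteq> 0" using wd by (auto simp: det2_def)
  have bw: "norm b \<le> norm w" using bmin[OF wL w0] .
  define nb where "nb = (norm b)^2"
  have nbp: "0 < nb" unfolding nb_def using b0 by simp
  define k where "k = round ((w \<bullet> b) / nb)"
  define v where "v = w - of_int k *\<^sub>R b"
  have vL: "v \<in> lat x y" unfolding v_def by (intro lat_diff wL lat_scale bL)
  have dv: "det2 b v = det2 b w" unfolding v_def by (simp add: det2_lin)
  then have v0: "v \<noteq> 0" using wd by (auto simp: det2_def)
  have bv: "norm b \<le> norm v" using bmin[OF vL v0] .
  have ip: "v \<bullet> b = w \<bullet> b - of_int k * nb" unfolding v_def nb_def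
    by (simp add: inner_diff_left power2_norm_eq_inner)
  have ipb: "\<bar>v \<bullet> b\<bar> \<le> nb / 2"
  proof -
    have "v \<bullet> b = nb * ((w \<bullet> b) / nb - of_int k)" unfolding ip using nbp by (simp add: field_simps)
    then have "\<bar>v \<bullet> b\<bar> = nb * \<bar>of_int k - (w \<bullet> b) / nb\<bar>" using nbp by (simp add: abs_mult abs_minus_commute)
    also have "\<dots> \<le> nb * (1/2)" unfolding k_def using nbp
      by (intro mult_left_mono of_int_round_abs_le) auto
    finally show ?thesis by simp
  qed
  have ipb2: "(b \<bullet> v)^2 \<le> nb^2 / 4"
  proof -
    have "\<bar>b \<bullet> v\<bar> \<le> nb/2" using ipb by (simp add: inner_commute)
    then have "(b \<bullet> v)^2 \<le> (nb/2)^2" by (metis abs_ge_zero abs_le_square_iff abs_of_nonneg order_trans)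
    then show ?thesis by (simp add: power2_eq_square)
  qed
  have lg: "(det2 b v)^2 + (b \<bullet> v)^2 = nb * (norm v)^2" using lagrange2[of b v] unfolding nb_def .
  have nbv: "nb \<le> (norm v)^2" unfolding nb_def using bv by (simp add: power_mono)
  have det_lb: "3/4 * nb * (norm v)^2 \<le> (det2 b v)^2"
  proof -
    have "nb^2 \<le> nb * (norm v)^2" using nbv nbp by (simp add: power2_eq_square)
    then show ?thesis using lg ipb2 by (simp add: algebra_simps) 
  qed
  have vw: "(norm v)^2 \<le> 5/4 * (norm w)^2"
  proof -
    have "(det2 b w)^2 \<le> nb * (norm w)^2" using lagrange2[of b w] zero_le_power2[of "b \<bullet> w"] unfolding nb_def by linarith
    moreover have "nb \<le> (norm w)^2" unfolding nb_def using bw by (simp add: power_mono)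
    ultimately have h1: "(det2 b w)^2 \<le> nb * (norm w)^2" and h2: "nb \<le> (norm w)^2" by auto
    have h3: "nb * (norm v)^2 \<le> nb * (norm w)^2 + nb^2/4" using lg ipb2 h1 unfolding dv by linarith
    have "nb * nb \<le> nb * (norm w)^2" using h2 nbp by (intro mult_left_mono) auto
    then have "nb^2/4 \<le> nb * (norm w)^2 / 4" by (simp add: power2_eq_square)
    then have "nb * (norm v)^2 \<le> nb * (norm w)^2 + nb * (norm w)^2 / 4" using h3 by linarith
    then have "nb * (norm v)^2 \<le> nb * (5/4 * (norm w)^2)" by (simp add: algebra_simps)
    then show ?thesis using nbp by simp
  qed
  define j where "j = nat (floor (norm v / norm b))"
  have nbpos: "0 < norm b" using b0 by simp
  have ratio: "1 \<le> norm v / norm b" using bv nbpos by simp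
  have j1: "1 \<le> j" unfolding j_def using ratio by (simp add: le_nat_iff)
  have jle: "real j * norm b \<le> norm v"
  proof -
    have "real j = of_int (floor (norm v / norm b))" unfolding j_def using ratio by simp
    also have "\<dots> \<le> norm v / norm b" by simp
    finally show ?thesis using nbpos by (simp add: field_simps)
  qed
  have jgt: "norm v < (real j + 1) * norm b"
  proof -
    have "real j = of_int (floor (norm v / norm b))" unfolding j_def using ratio by simp
    then have "norm v / norm b < real j + 1" by linarith
    then show ?thesis using nbpos by (simp add: field_simps)
  qed
  define u where "u = of_int (int j) *\<^sub>R b"
  have uL: "u \<in> lat x y" unfolding u_def by (rule lat_scale[OF bL])
  have nu: "norm u = real j * norm b" unfolding u_def by simp
  have uv: "norm u \<le> norm v" using jle nu by simp
  have uv2: "norm v \<le> 2 * norm u"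
  proof -
    have "(real j + 1) * norm b \<le> 2 * (real j * norm b)" using j1 nbpos by (simp add: algebra_simps)
    then show ?thesis using jgt nu by simp
  qed
  have du: "det2 u v = real j * det2 b v" unfolding u_def by (simp add: det2_lin)
  have "3/16 * (norm v)^4 \<le> (det2 u v)^2"
  proof -
    have "(det2 u v)^2 = (real j)^2 * (det2 b v)^2" unfolding du by (simp add: power_mult_distrib)
    also have "\<dots> \<ge> (real j)^2 * (3/4 * nb * (norm v)^2)" using det_lb by (intro mult_left_mono) auto
    finally have h: "(real j)^2 * (3/4 * nb * (norm v)^2) \<le> (det2 u v)^2" .
    have "(real j)^2 * nb = (norm u)^2" unfolding nb_def nu by (simp add: power_mult_distrib)
    moreover have "(norm v)^2 \<le> 4 * (norm u)^2"
    proof -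
      have "(norm v)^2 \<le> (2 * norm u)^2" using uv2 by (intro power_mono) auto
      then show ?thesis by (simp add: power_mult_distrib)
    qed
    ultimately have "(norm v)^2 * (norm v)^2 \<le> (4 * (norm u)^2) * (norm v)^2"
      by (intro mult_right_mono) auto
    then have "3/16 * (norm v)^4 \<le> 3/4 * (norm u)^2 * (norm v)^2"
      by (simp add: power4_eq_xxxx power2_eq_square algebra_simps)
    also have "\<dots> = (real j)^2 * (3/4 * nb * (norm v)^2)"
      using \<open>(real j)^2 * nb = (norm u)^2\<close> by (simp add: algebra_simps)
    finally show ?thesis using h by linarith
  qed
  then show ?thesis using uL vL v0 uv vw wn by (intro exI[of _ u] exI[of _ v]) auto
qed



lemma abs_prod_le: "\<bar>x\<bar> \<le> a \<Longrightarrow> \<bar>y\<bar> \<le> b \<Longrightarrow> \<bar>x*y\<bar> \<le> a*b" for x y a b :: real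
  by (simp add: abs_mult mult_mono')

lemma tri2: "\<bar>- 2*w*z + v\<bar> \<le> 2*\<bar>w*z\<bar> + \<bar>v\<bar>" for w z v :: real
  by (cases "w*z \<ge> 0"; cases "v \<ge> 0"; cases "- 2*w*z+v \<ge> 0") auto

lemma final_ineq:
  fixes A B G Qu Qv Bm R2 \<eta> \<rho> \<Sigma> :: real
  assumes id: "(A+B-G-R2*A*B)^2 = A*B*(2-R2*A)*(2-R2*B)"
    and hA: "\<bar>A - Qu/2\<bar> \<le> \<eta>" and hB: "\<bar>B - Qv/2\<bar> \<le> \<eta>"
    and hG: "\<bar>G - (Qu+Qv+2*Bm)/2\<bar> \<le> 4*\<eta>"
    and Qu: "0 \<le> Qu" "Qu \<le> \<Sigma>" and Qv: "0 \<le> Qv" "Qv \<le> \<Sigma>" and Bm: "\<bar>Bm\<bar> \<le> \<Sigma>"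
    and R2: "0 \<le> R2" "R2 \<le> \<rho>" and eta: "0 \<le> \<eta>" "\<eta> \<le> 1" and rho: "\<rho> \<le> 1"
  shows "Qu*Qv - Bm^2 \<le> (\<eta> + \<rho>) * (4*(\<Sigma>/2+1) + 2*\<Sigma> + 4*(\<Sigma>/2+1)^3 + (\<Sigma>/2+1)^4
           + (6 + (\<Sigma>/2+1)^2) * (12 + 2*(\<Sigma>/2+1)^2 + 2*\<Sigma>))"
proof -
  define K where "K = \<Sigma>/2 + 1"
  have K1: "1 \<le> K" using Qu K_def by simp
  have aA: "\<bar>A\<bar> \<le> K" using hA Qu eta unfolding K_def by (simp add: abs_le_iff)
  have aB: "\<bar>B\<bar> \<le> K" using hB Qv eta unfolding K_def by (simp add: abs_le_iff)
  have aAB: "\<bar>A*B\<bar> \<le> K^2" using abs_prod_le[OF aA aB] by (simp add: power2_eq_square)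
  have aRAB: "\<bar>R2*A*B\<bar> \<le> \<rho>*K^2"
    using abs_prod_le[OF _ aAB, of R2 \<rho>] R2 by (simp add: mult.assoc)
  define X where "X = A+B-G-R2*A*B"
  define e where "e = 6*\<eta> + \<rho>*K^2"
  have Xp: "\<bar>X + Bm\<bar> \<le> e"
  proof -
    have "X + Bm = (A - Qu/2) + (B - Qv/2) - (G - (Qu+Qv+2*Bm)/2) - R2*A*B"
      unfolding X_def by (simp add: field_simps)
    then show ?thesis using hA hB hG aRAB unfolding e_def by (simp only: abs_le_iff) linarith
  qed
  have Xm: "\<bar>X - Bm\<bar> \<le> e + 2*\<Sigma>" using Xp Bm by (simp only: abs_le_iff) linarith
  have e0: "0 \<le> e" unfolding e_def using eta R2 by simp
  have X2: "\<bar>X^2 - Bm^2\<bar> \<le> e*(e+2*\<Sigma>)"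
  proof -
    have "X^2 - Bm^2 = (X+Bm)*(X-Bm)" by (simp add: power2_eq_square algebra_simps)
    then show ?thesis using abs_prod_le[OF Xp Xm] by simp
  qed
  define RHS where "RHS = A*B*(2-R2*A)*(2-R2*B)"
  have RHS1: "RHS - 4*A*B = - 2*(R2*A*B)*(A+B) + (R2*A*B)^2"
    unfolding RHS_def by (simp add: power2_eq_square algebra_simps)
  have aApB: "\<bar>A+B\<bar> \<le> 2*K" using aA aB by (simp only: abs_le_iff) linarith
  have t1: "\<bar>(R2*A*B)*(A+B)\<bar> \<le> (\<rho>*K^2)*(2*K)"
    by (rule abs_prod_le[OF aRAB aApB])
  have t2: "\<bar>(R2*A*B)^2\<bar> \<le> (\<rho>*K^2)^2"
    using abs_prod_le[OF aRAB aRAB] by (simp add: power2_eq_square)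
  have rr: "(\<rho>*K^2)^2 \<le> \<rho>*K^4"
  proof -
    have r0: "0 \<le> \<rho>" using R2 by simp
    have "(\<rho>*K^2)^2 = \<rho>*\<rho>*K^4" by (simp add: power2_eq_square power4_eq_xxxx)
    also have "\<dots> \<le> 1*\<rho>*K^4" using r0 rho by (intro mult_right_mono) (auto intro: mult_right_mono)
    finally show ?thesis by simp
  qed
  have RHS2: "\<bar>RHS - 4*A*B\<bar> \<le> \<rho>*(4*K^3 + K^4)"
  proof -
    have "\<bar>RHS - 4*A*B\<bar> \<le> 2*\<bar>(R2*A*B)*(A+B)\<bar> + \<bar>(R2*A*B)^2\<bar>" unfolding RHS1
      by (rule tri2)
    also have "\<dots> \<le> 2*((\<rho>*K^2)*(2*K)) + \<rho>*K^4" using t1 t2 rr by linarith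
    also have "\<dots> = \<rho>*(4*K^3 + K^4)" by (simp add: power3_eq_cube power2_eq_square algebra_simps)
    finally show ?thesis .
  qed
  have AB4: "\<bar>4*A*B - Qu*Qv\<bar> \<le> \<eta>*(4*K + 2*\<Sigma>)"
  proof -
    have "4*A*B - Qu*Qv = (2*A - Qu)*(2*B) + Qu*(2*B - Qv)" by (simp add: algebra_simps)
    moreover have "\<bar>(2*A - Qu)*(2*B)\<bar> \<le> (2*\<eta>)*(2*K)"
    proof (rule abs_prod_le)
      show "\<bar>2*A - Qu\<bar> \<le> 2*\<eta>" using hA by (simp only: abs_le_iff) linarith
      show "\<bar>2*B\<bar> \<le> 2*K" using aB by (simp only: abs_le_iff) linarith
    qed
    moreover have "\<bar>Qu*(2*B - Qv)\<bar> \<le> \<Sigma>*(2*\<eta>)"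
    proof (rule abs_prod_le)
      show "\<bar>Qu\<bar> \<le> \<Sigma>" using Qu by simp
      show "\<bar>2*B - Qv\<bar> \<le> 2*\<eta>" using hB by (simp only: abs_le_iff) linarith
    qed
    ultimately show ?thesis by (simp add: algebra_simps)
  qed
  have XR: "X^2 = RHS" unfolding X_def RHS_def using id .
  have main: "Qu*Qv - Bm^2 \<le> \<eta>*(4*K + 2*\<Sigma>) + \<rho>*(4*K^3 + K^4) + e*(e+2*\<Sigma>)"
    using AB4 RHS2 X2 XR by (simp only: abs_le_iff) linarith
  have ee: "e \<le> (\<eta>+\<rho>)*(6 + K^2)" unfolding e_def using eta R2 by (simp add: algebra_simps)
  have ee2: "e + 2*\<Sigma> \<le> 12 + 2*K^2 + 2*\<Sigma>"
  proof -
    have "(\<eta>+\<rho>)*(6 + K^2) \<le> 2*(6+K^2)" using eta rho by (intro mult_right_mono) auto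
    then show ?thesis using ee by simp
  qed
  have "e*(e+2*\<Sigma>) \<le> ((\<eta>+\<rho>)*(6 + K^2))*(12 + 2*K^2 + 2*\<Sigma>)"
    using ee ee2 e0 Qu by (intro mult_mono) auto
  then have "Qu*Qv - Bm^2 \<le> \<eta>*(4*K + 2*\<Sigma>) + \<rho>*(4*K^3 + K^4) + ((\<eta>+\<rho>)*(6 + K^2))*(12 + 2*K^2 + 2*\<Sigma>)"
    using main by linarith
  also have "\<dots> \<le> (\<eta>+\<rho>)*(4*K + 2*\<Sigma>) + (\<eta>+\<rho>)*(4*K^3 + K^4) + ((\<eta>+\<rho>)*(6 + K^2))*(12 + 2*K^2 + 2*\<Sigma>)"
  proof -
    have "\<eta>*(4*K + 2*\<Sigma>) \<le> (\<eta>+\<rho>)*(4*K + 2*\<Sigma>)" using R2 K1 Qu by (intro mult_right_mono) auto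
    moreover have "\<rho>*(4*K^3 + K^4) \<le> (\<eta>+\<rho>)*(4*K^3 + K^4)" using eta K1 by (intro mult_right_mono) auto
    ultimately show ?thesis by linarith
  qed
  finally show ?thesis unfolding K_def by (simp add: algebra_simps)
qed


definition qf :: "real \<Rightarrow> real \<Rightarrow> real \<Rightarrow> real^2 \<Rightarrow> real" where
  "qf a b c z = a*(z$1)^2 + 2*b*(z$1)*(z$2) + c*(z$2)^2"

definition bm :: "real \<Rightarrow> real \<Rightarrow> real \<Rightarrow> real^2 \<Rightarrow> real^2 \<Rightarrow> real" where
  "bm a b c u v = a*u$1* v$1 + b*(u$1* v$2 + u$2* v$1) + c*u$2* v$2"

lemma qf_add: "qf a b c (u+v) = qf a b c u + qf a b c v + 2 * bm a b c u v"
  by (simp add: qf_def bm_def power2_eq_square algebra_simps)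

lemma qf_lagr: "qf a b c u * qf a b c v - (bm a b c u v)^2 = (a*c - b^2) * (det2 u v)^2"
  by (simp add: qf_def bm_def det2_def power2_eq_square algebra_simps)

lemma qf_lb: "(a*c - b^2) * (norm z)^2 \<le> qf a b c z * (a + c)"
proof -
  have "qf a b c z * (a + c) - (a*c - b^2) * (norm z)^2 = (a*z$1 + b*z$2)^2 + (b*z$1 + c*z$2)^2"
    by (simp only: norm2 qf_def) (simp add: power2_eq_square algebra_simps)
  then show ?thesis by (metis diff_ge_0_iff_ge add_nonneg_nonneg zero_le_power2)
qed

lemma qf_ub: "qf a b c z \<le> (\<bar>a\<bar> + 2*\<bar>b\<bar> + \<bar>c\<bar>) * (norm z)^2"
proof -
  have z1: "\<bar>z$1\<bar> \<le> norm z" and z2: "\<bar>z$2\<bar> \<le> norm z" by (rule component_le_norm_cart)+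
  have p: "\<bar>z$i * z$j\<bar> \<le> (norm z)^2" for i j
    using mult_mono[OF component_le_norm_cart[of z i] component_le_norm_cart[of z j]]
    by (simp add: abs_mult power2_eq_square)
  have "qf a b c z = a*(z$1*z$1) + 2*b*(z$1*z$2) + c*(z$2*z$2)" by (simp add: qf_def power2_eq_square algebra_simps)
  also have "\<dots> \<le> \<bar>a\<bar>*(norm z)^2 + 2*\<bar>b\<bar>*(norm z)^2 + \<bar>c\<bar>*(norm z)^2"
  proof -
    have "a*(z$1*z$1) \<le> \<bar>a\<bar>*(norm z)^2" using abs_prod_le[OF order_refl p[of 1 1], of a] by (simp add: abs_le_iff)
    moreover have "2*b*(z$1*z$2) \<le> 2*\<bar>b\<bar>*(norm z)^2"
      using abs_prod_le[OF order_refl p[of 1 2], of b] by (simp add: abs_le_iff)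
    moreover have "c*(z$2*z$2) \<le> \<bar>c\<bar>*(norm z)^2" using abs_prod_le[OF order_refl p[of 2 2], of c] by (simp add: abs_le_iff)
    ultimately show ?thesis by linarith
  qed
  finally show ?thesis by (simp add: algebra_simps)
qed

lemma bm_ub: "\<bar>bm a b c u v\<bar> \<le> (\<bar>a\<bar> + 2*\<bar>b\<bar> + \<bar>c\<bar>) * (norm u * norm v)"
proof -
  have p: "\<bar>u$i * v$j\<bar> \<le> norm u * norm v" for i j
    using mult_mono[OF component_le_norm_cart[of u i] component_le_norm_cart[of v j]]
    by (simp add: abs_mult)
  have "\<bar>bm a b c u v\<bar> \<le> \<bar>a\<bar>*\<bar>u$1* v$1\<bar> + \<bar>b\<bar>*\<bar>u$1* v$2\<bar> + \<bar>b\<bar>*\<bar>u$2* v$1\<bar> + \<bar>c\<bar>*\<bar>u$2* v$2\<bar>"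
    unfolding bm_def by (simp add: abs_mult[symmetric] algebra_simps)
  also have "\<dots> \<le> \<bar>a\<bar>*(norm u * norm v) + \<bar>b\<bar>*(norm u * norm v) + \<bar>b\<bar>*(norm u * norm v) + \<bar>c\<bar>*(norm u * norm v)"
    by (intro add_mono mult_left_mono p) auto
  finally show ?thesis by (simp add: algebra_simps)
qed

lemma two_zero: "a + b*K = 0 \<Longrightarrow> a*K + b = 0 \<Longrightarrow> \<bar>K\<bar> < 1 \<Longrightarrow> a = 0 \<and> b = (0::real)"
proof -
  assume h: "a + b*K = 0" "a*K + b = 0" "\<bar>K\<bar> < 1"
  have a: "a = - (b*K)" using h(1) by linarith
  have "(- (b*K))*K + b = 0" using h(2) unfolding a .
  then have e: "b*(1 - K^2) = 0" by (simp add: algebra_simps power2_eq_square)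
  have "K^2 < 1" using h(3) abs_square_less_1 by blast
  then have "b = 0" using e by simp
  then show ?thesis using h by simp
qed

lemma div_le_lemma: "0 < R \<Longrightarrow> \<bar>X\<bar> \<le> e * R \<Longrightarrow> \<bar>X / R\<bar> \<le> (e::real)"
  by (simp add: abs_divide pos_divide_le_eq)

lemma core_contra:
  fixes \<kappa> :: "real^2 \<Rightarrow> real" and a b c \<eta> \<rho> r c1 c2 c3 :: real and x y :: "real^2"
  defines "\<Sigma> \<equiv> \<bar>a\<bar> + 2*\<bar>b\<bar> + \<bar>c\<bar>"
  assumes ev: "\<And>z. \<kappa> (-z) = \<kappa> z" and k0: "\<kappa> 0 = 1"
    and tay: "\<And>z. norm z < r \<Longrightarrow> \<bar>\<kappa> z - 1 + qf a b c z / 2\<bar> \<le> \<eta> * (norm z)^2"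
    and a0: "a > 0" and c0: "c > 0" and d0: "a*c - b^2 > 0"
    and eta: "0 < \<eta>" "\<eta> \<le> 1" and rho: "\<rho> \<le> 1"
    and etal: "\<eta> * (a + c) < (a*c - b^2)/2"
    and rhoS: "\<rho> * (\<Sigma>/2 + 1) < 2"
    and small: "(\<eta> + \<rho>) * (4*(\<Sigma>/2+1) + 2*\<Sigma> + 4*(\<Sigma>/2+1)^3 + (\<Sigma>/2+1)^4
           + (6 + (\<Sigma>/2+1)^2) * (12 + 2*(\<Sigma>/2+1)^2 + 2*\<Sigma>)) < 3/16 * (a*c - b^2)"
    and D: "det2 x y \<noteq> 0" and xy: "x \<noteq> y"
    and nx: "norm x < r/3" "norm y < r/3" "norm (y - x) < r/3"
    and nx2: "(norm x)^2 \<le> 4/5*\<rho>" "(norm y)^2 \<le> 4/5*\<rho>" "(norm (y - x))^2 \<le> \<rho>"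
    and A: "\<And>t. c1*\<kappa> t + c2*\<kappa>(t+x) + c3*\<kappa>(t+y) = 0"
    and B: "\<And>t. c1*\<kappa> t + c2*\<kappa>(t-x) + c3*\<kappa>(t-y) = 0"
    and cne: "\<not> (c1 = 0 \<and> c2 = 0 \<and> c3 = 0)"
  shows False
proof -
  define d where "d = a*c - b^2"
  have ac: "0 < a + c" using a0 c0 by simp
  have Sg0: "0 \<le> \<Sigma>" unfolding \<Sigma>_def by simp
  have qpos: "0 \<le> qf a b c z" for z
  proof -
    have "0 \<le> d * (norm z)^2" using d0 unfolding d_def by simp
    also have "\<dots> \<le> qf a b c z * (a + c)" unfolding d_def by (rule qf_lb)
    finally show ?thesis using ac by (simp add: zero_le_mult_iff)
  qed
  have lt1: "\<bar>\<kappa> w\<bar> < 1" if w0: "w \<noteq> 0" and wr: "norm w < r" and wrho: "(norm w)^2 \<le> \<rho>" for w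
  proof -
    have T: "\<bar>\<kappa> w - 1 + qf a b c w / 2\<bar> \<le> \<eta> * (norm w)^2" using tay[OF wr] .
    have nw: "0 < (norm w)^2" using w0 by simp
    have "2*\<eta>*(a+c) * (norm w)^2 < d * (norm w)^2" using etal nw unfolding d_def by simp
    also have "\<dots> \<le> qf a b c w * (a + c)" unfolding d_def by (rule qf_lb)
    finally have "(2*\<eta>*(norm w)^2) * (a+c) < qf a b c w * (a + c)" by (simp add: algebra_simps)
    then have q1: "2*\<eta>*(norm w)^2 < qf a b c w" using ac by simp
    have q2: "qf a b c w \<le> \<Sigma> * (norm w)^2" unfolding \<Sigma>_def by (rule qf_ub)
    have "\<Sigma> * (norm w)^2 \<le> \<Sigma> * \<rho>" using wrho Sg0 by (simp add: mult_left_mono)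
    moreover have "\<eta> * (norm w)^2 \<le> 1 * \<rho>" using eta wrho nw by (metis mult_mono' order_less_imp_le zero_le_one)
    ultimately show ?thesis using T q1 q2 rhoS by (simp add: abs_le_iff abs_less_iff algebra_simps)
  qed
  have x0: "x \<noteq> 0" and y0: "y \<noteq> 0" using D by (auto simp: det2_def)
  have yx0: "y - x \<noteq> 0" using xy by simp
  have r0: "0 < r" using nx(1) norm_ge_zero[of x] by linarith
  have rx: "norm x < r" "norm y < r" "norm (y - x) < r" using nx r0 by linarith+
  have "0 \<le> (norm x)^2" by simp
  then have rho0: "0 \<le> \<rho>" using nx2(1) by linarith
  have rx2: "(norm x)^2 \<le> \<rho>" "(norm y)^2 \<le> \<rho>" using nx2 rho0 by linarith+
  have Kx: "\<bar>\<kappa> x\<bar> < 1" using lt1[OF x0 rx(1) rx2(1)] .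
  have Ky: "\<bar>\<kappa> y\<bar> < 1" using lt1[OF y0 rx(2) rx2(2)] .
  have Kyx: "\<bar>\<kappa> (y - x)\<bar> < 1" using lt1[OF yx0 rx(3) nx2(3)] .
  have kxm: "\<kappa> (-x) = \<kappa> x" "\<kappa> (-y) = \<kappa> y" using ev by auto
  have c3: "c3 \<noteq> 0"
  proof
    assume h: "c3 = 0"
    have "c1 + c2 * \<kappa> x = 0" using B[of 0] h k0 kxm by simp
    moreover have "c1 * \<kappa> x + c2 = 0" using B[of x] h k0 by simp
    ultimately show False using two_zero[OF _ _ Kx] cne h by blast
  qed
  have c2: "c2 \<noteq> 0"
  proof
    assume h: "c2 = 0"
    have "c1 + c3 * \<kappa> y = 0" using B[of 0] h k0 kxm by simp
    moreover have "c1 * \<kappa> y + c3 = 0" using B[of y] h k0 by simp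
    ultimately show False using two_zero[OF _ _ Ky] cne h by blast
  qed
  have c1: "c1 \<noteq> 0"
  proof
    assume h: "c1 = 0"
    have e: "\<kappa> (x - y) = \<kappa> (y - x)" using ev[of "y - x"] by simp
    have "c2 + c3 * \<kappa> (y - x) = 0" using B[of x] h k0 e by simp
    moreover have "c2 * \<kappa> (y - x) + c3 = 0" using B[of y] h k0 by simp
    ultimately show False using two_zero[OF _ _ Kyx] cne h by blast
  qed
  have xS: "x \<in> cosset \<kappa>" by (rule Dpair[OF A B ev k0]) (use c1 c2 in simp)
  have yS: "y \<in> cosset \<kappa>"
  proof (rule Dpair[of c1 \<kappa> c3 y c2 x, OF _ _ ev k0])
    show "c1 * \<kappa> t + c3 * \<kappa> (t + y) + c2 * \<kappa> (t + x) = 0" for t using A[of t] by linarith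
    show "c1 * \<kappa> t + c3 * \<kappa> (t - y) + c2 * \<kappa> (t - x) = 0" for t using B[of t] by linarith
    show "c1 * c3 \<noteq> 0" using c1 c3 by simp
  qed
  have yxS: "y - x \<in> cosset \<kappa>"
  proof (rule Dpair[of c2 \<kappa> c3 "y - x" c1 "-x", OF _ _ ev k0])
    fix t
    have e1: "t - x + x = t" "t - x + y = t + (y - x)" "t + - x = t - x" by (simp_all add: algebra_simps)
    show "c2 * \<kappa> t + c3 * \<kappa> (t + (y - x)) + c1 * \<kappa> (t + - x) = 0"
      using A[of "t - x"] unfolding e1 by linarith
  next
    fix t
    have e1: "t + x - x = t" "t + x - y = t - (y - x)" "t - - x = t + x" by (simp_all add: algebra_simps)
    show "c2 * \<kappa> t + c3 * \<kappa> (t - (y - x)) + c1 * \<kappa> (t - - x) = 0"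
      using B[of "t + x"] unfolding e1 by linarith
  next
    show "c2 * c3 \<noteq> 0" using c2 c3 by simp
  qed
  have latS: "z \<in> cosset \<kappa>" if "z \<in> lat x y" for z
    using that cosset_lattice[OF xS yS yxS ev k0] unfolding lat_def by blast
  obtain u v where uL: "u \<in> lat x y" and vL: "v \<in> lat x y" and v0: "v \<noteq> 0" and uv: "norm u \<le> norm v"
    and vb: "(norm v)^2 \<le> 5/4 * max ((norm x)^2) ((norm y)^2)" and dt: "3/16 * (norm v)^4 \<le> (det2 u v)^2"
    using lat_good_pair[OF D] by blast
  have uS: "u \<in> cosset \<kappa>" and vS: "v \<in> cosset \<kappa>" and uvS: "u + v \<in> cosset \<kappa>"
    using latS uL vL lat_add[OF uL vL] by auto
  have idt: "(\<kappa> (u+v) - \<kappa> u * \<kappa> v)^2 = (1 - (\<kappa> u)^2) * (1 - (\<kappa> v)^2)"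
    by (rule cos_identity[OF uS vS uvS ev k0])
  define R2 where "R2 = (norm v)^2"
  have R2p: "0 < R2" unfolding R2_def using v0 by simp
  have R2rho: "R2 \<le> \<rho>"
  proof -
    have "max ((norm x)^2) ((norm y)^2) \<le> 4/5*\<rho>" using nx2 by simp
    then show ?thesis unfolding R2_def using vb by linarith
  qed
  have vr: "2 * norm v < r"
  proof -
    have "max ((norm x)^2) ((norm y)^2) < (r/3)^2"
    proof -
      have "(norm x)^2 < (r/3)^2" using nx(1) by (intro power_strict_mono) auto
      moreover have "(norm y)^2 < (r/3)^2" using nx(2) by (intro power_strict_mono) auto
      ultimately show ?thesis by simp
    qed
    then have "(norm v)^2 < 5/4 * (r/3)^2" using vb by linarith
    then have "(norm v)^2 * 36 < 5 * r^2" by (simp add: power_divide)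
    moreover have "0 \<le> r^2" by simp
    ultimately have "4*(norm v)^2 < r^2" by linarith
    then have "(2 * norm v)^2 < r^2" by (simp add: power_mult_distrib)
    moreover have "0 \<le> r" using nx(1) norm_ge_zero[of x] by linarith
    ultimately show ?thesis by (metis abs_of_nonneg norm_ge_zero power2_less_imp_less zero_le_mult_iff zero_le_numeral)
  qed
  have nuv: "norm (u + v) \<le> 2 * norm v" using norm_triangle_ineq[of u v] uv by linarith
  have ur: "norm u < r" and vr': "norm v < r" and uvr: "norm (u+v) < r" using vr uv nuv norm_ge_zero[of v] by linarith+
  have Tu: "\<bar>\<kappa> u - 1 + qf a b c u / 2\<bar> \<le> \<eta> * (norm u)^2" using tay[OF ur] .
  have Tv: "\<bar>\<kappa> v - 1 + qf a b c v / 2\<bar> \<le> \<eta> * (norm v)^2" using tay[OF vr'] .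
  have Tuv: "\<bar>\<kappa> (u+v) - 1 + qf a b c (u+v) / 2\<bar> \<le> \<eta> * (norm (u+v))^2" using tay[OF uvr] .
  have nu2: "(norm u)^2 \<le> R2" unfolding R2_def using uv by (intro power_mono) auto
  have nuv2: "(norm (u+v))^2 \<le> 4 * R2"
  proof -
    have "(norm (u+v))^2 \<le> (2 * norm v)^2" using nuv by (intro power_mono) auto
    then show ?thesis unfolding R2_def by (simp add: power_mult_distrib)
  qed
  define \<alpha> where "\<alpha> = 1 - \<kappa> u"
  define \<beta> where "\<beta> = 1 - \<kappa> v"
  define \<gamma> where "\<gamma> = 1 - \<kappa> (u+v)"
  have id2: "(\<alpha> + \<beta> - \<gamma> - \<alpha>*\<beta>)^2 = \<alpha>*\<beta>*(2-\<alpha>)*(2-\<beta>)"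
  proof -
    have "\<kappa> (u+v) - \<kappa> u * \<kappa> v = \<alpha> + \<beta> - \<gamma> - \<alpha>*\<beta>" unfolding \<alpha>_def \<beta>_def \<gamma>_def by (simp add: algebra_simps)
    moreover have "(1 - (\<kappa> u)^2) * (1 - (\<kappa> v)^2) = \<alpha>*\<beta>*(2-\<alpha>)*(2-\<beta>)"
      unfolding \<alpha>_def \<beta>_def by (simp add: power2_eq_square algebra_simps)
    ultimately show ?thesis using idt by simp
  qed
  define Av where "Av = \<alpha> / R2"
  define Bv where "Bv = \<beta> / R2"
  define Gv where "Gv = \<gamma> / R2"
  define Qu where "Qu = qf a b c u / R2"
  define Qv where "Qv = qf a b c v / R2"
  define Bmv where "Bmv = bm a b c u v / R2"
  have id3: "(Av+Bv-Gv-R2*Av*Bv)^2 = Av*Bv*(2-R2*Av)*(2-R2*Bv)"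
  proof -
    have a1: "\<alpha> = R2 * Av" "\<beta> = R2 * Bv" "\<gamma> = R2 * Gv" unfolding Av_def Bv_def Gv_def using R2p by simp_all
    have "(R2*(Av+Bv-Gv-R2*Av*Bv))^2 = R2^2 * (Av*Bv*(2-R2*Av)*(2-R2*Bv))"
      using id2 unfolding a1 by (simp add: power2_eq_square algebra_simps)
    then have "R2^2 * (Av+Bv-Gv-R2*Av*Bv)^2 = R2^2 * (Av*Bv*(2-R2*Av)*(2-R2*Bv))"
      by (simp add: power_mult_distrib)
    then show ?thesis using R2p by simp
  qed
  have hA: "\<bar>Av - Qu/2\<bar> \<le> \<eta>"
  proof -
    have "Av - Qu/2 = (\<alpha> - qf a b c u / 2) / R2" unfolding Av_def Qu_def using R2p by (simp add: field_simps)
    moreover have "\<bar>\<alpha> - qf a b c u / 2\<bar> \<le> \<eta> * R2"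
    proof -
      have "\<bar>\<alpha> - qf a b c u / 2\<bar> = \<bar>\<kappa> u - 1 + qf a b c u / 2\<bar>" unfolding \<alpha>_def by linarith
      also have "\<dots> \<le> \<eta> * (norm u)^2" by (rule Tu)
      also have "\<dots> \<le> \<eta> * R2" using nu2 eta by (simp add: mult_left_mono)
      finally show ?thesis .
    qed
    ultimately show ?thesis using div_le_lemma[OF R2p] by simp
  qed
  have hB: "\<bar>Bv - Qv/2\<bar> \<le> \<eta>"
  proof -
    have "Bv - Qv/2 = (\<beta> - qf a b c v / 2) / R2" unfolding Bv_def Qv_def using R2p by (simp add: field_simps)
    moreover have "\<bar>\<beta> - qf a b c v / 2\<bar> \<le> \<eta> * R2"
    proof -
      have "\<bar>\<beta> - qf a b c v / 2\<bar> = \<bar>\<kappa> v - 1 + qf a b c v / 2\<bar>" unfolding \<beta>_def by linarith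
      also have "\<dots> \<le> \<eta> * (norm v)^2" by (rule Tv)
      finally show ?thesis unfolding R2_def .
    qed
    ultimately show ?thesis using div_le_lemma[OF R2p] by simp
  qed
  have hG: "\<bar>Gv - (Qu+Qv+2*Bmv)/2\<bar> \<le> 4*\<eta>"
  proof -
    have "Gv - (Qu+Qv+2*Bmv)/2 = (\<gamma> - qf a b c (u+v) / 2) / R2"
      unfolding Gv_def Qu_def Qv_def Bmv_def qf_add using R2p by (simp add: field_simps)
    moreover have "\<bar>\<gamma> - qf a b c (u+v) / 2\<bar> \<le> (4*\<eta>) * R2"
    proof -
      have "\<bar>\<gamma> - qf a b c (u+v) / 2\<bar> = \<bar>\<kappa> (u+v) - 1 + qf a b c (u+v) / 2\<bar>" unfolding \<gamma>_def by linarith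
      also have "\<dots> \<le> \<eta> * (norm (u+v))^2" by (rule Tuv)
      also have "\<dots> \<le> \<eta> * (4 * R2)" using nuv2 eta by (simp add: mult_left_mono)
      finally show ?thesis by simp
    qed
    ultimately show ?thesis using div_le_lemma[OF R2p] by simp
  qed
  have Qub: "0 \<le> Qu" "Qu \<le> \<Sigma>"
  proof -
    show "0 \<le> Qu" unfolding Qu_def using qpos R2p by simp
    have "qf a b c u \<le> \<Sigma> * (norm u)^2" unfolding \<Sigma>_def by (rule qf_ub)
    also have "\<dots> \<le> \<Sigma> * R2" using nu2 Sg0 by (simp add: mult_left_mono)
    finally show "Qu \<le> \<Sigma>" unfolding Qu_def using R2p by (simp add: pos_divide_le_eq)
  qed
  have Qvb: "0 \<le> Qv" "Qv \<le> \<Sigma>"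
  proof -
    show "0 \<le> Qv" unfolding Qv_def using qpos R2p by simp
    have "qf a b c v \<le> \<Sigma> * (norm v)^2" unfolding \<Sigma>_def by (rule qf_ub)
    then show "Qv \<le> \<Sigma>" unfolding Qv_def R2_def using R2p R2_def by (simp add: pos_divide_le_eq)
  qed
  have Bmb: "\<bar>Bmv\<bar> \<le> \<Sigma>"
  proof -
    have "\<bar>bm a b c u v\<bar> \<le> \<Sigma> * (norm u * norm v)" unfolding \<Sigma>_def by (rule bm_ub)
    also have "\<dots> \<le> \<Sigma> * R2" unfolding R2_def power2_eq_square using uv Sg0
      by (intro mult_left_mono mult_right_mono) auto
    finally show ?thesis unfolding Bmv_def using div_le_lemma[OF R2p] by simp
  qed
  have fin: "Qu*Qv - Bmv^2 \<le> (\<eta> + \<rho>) * (4*(\<Sigma>/2+1) + 2*\<Sigma> + 4*(\<Sigma>/2+1)^3 + (\<Sigma>/2+1)^4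
           + (6 + (\<Sigma>/2+1)^2) * (12 + 2*(\<Sigma>/2+1)^2 + 2*\<Sigma>))"
    by (rule final_ineq[OF id3 hA hB hG Qub Qvb Bmb]) (use R2p R2rho eta rho in auto)
  have lowb: "3/16 * d \<le> Qu*Qv - Bmv^2"
  proof -
    have "Qu*Qv - Bmv^2 = (qf a b c u * qf a b c v - (bm a b c u v)^2) / R2^2"
      unfolding Qu_def Qv_def Bmv_def using R2p by (simp add: field_simps power2_eq_square)
    also have "\<dots> = d * (det2 u v)^2 / R2^2" unfolding qf_lagr d_def ..
    finally have e: "Qu*Qv - Bmv^2 = d * (det2 u v)^2 / R2^2" .
    have "(norm v)^4 = R2^2" unfolding R2_def by simp
    then have "3/16 * R2^2 \<le> (det2 u v)^2" using dt by simp
    then have "d * (3/16 * R2^2) \<le> d * (det2 u v)^2" using d0 unfolding d_def by (intro mult_left_mono) auto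
    then have "3/16 * d \<le> d * (det2 u v)^2 / R2^2" using R2p by (simp add: field_simps)
    then show ?thesis using e by simp
  qed
  show False using fin lowb small unfolding d_def by linarith
qed


lemma degen_relation:
  fixes M :: "'a measure" and \<Psi> :: "real^2 \<Rightarrow> 'a \<Rightarrow> real" and \<kappa> :: "real^2 \<Rightarrow> real"
    and s :: "3 \<Rightarrow> real^2"
  assumes meas: "\<And>t. \<Psi> t \<in> borel_measurable M"
    and sq: "\<And>s. integral\<^sup>L M (\<lambda>\<omega>. (\<Psi> s \<omega>)\<^sup>2) = 1"
    and cov: "\<And>s t. integral\<^sup>L M (\<lambda>\<omega>. \<Psi> s \<omega> * \<Psi> t \<omega>) = \<kappa> (s - t)"
    and mean: "\<And>s. integral\<^sup>L M (\<Psi> s) = 0"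
    and ev: "\<And>z. \<kappa> (-z) = \<kappa> z"
    and det: "det (covariance_matrix M (\<lambda>i. \<Psi> (s i))) = 0"
  shows "\<exists>c::real^3. c \<noteq> 0 \<and> (\<forall>t. (\<Sum>i\<in>UNIV. c$i * \<kappa> (t - s i)) = 0)"
proof -
  have sqi: "integrable M (\<lambda>\<omega>. (\<Psi> s \<omega>)\<^sup>2)" for s
    using sq[of s] not_integrable_integral_eq by fastforce
  have pri: "integrable M (\<lambda>\<omega>. \<Psi> s \<omega> * \<Psi> t \<omega>)" for s t
  proof (rule Bochner_Integration.integrable_bound[where f="\<lambda>\<omega>. (\<Psi> s \<omega>)\<^sup>2 + (\<Psi> t \<omega>)\<^sup>2"])
    show "integrable M (\<lambda>\<omega>. (\<Psi> s \<omega>)\<^sup>2 + (\<Psi> t \<omega>)\<^sup>2)" using sqi by simp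
    show "(\<lambda>\<omega>. \<Psi> s \<omega> * \<Psi> t \<omega>) \<in> borel_measurable M" using meas by simp
    show "AE \<omega> in M. norm (\<Psi> s \<omega> * \<Psi> t \<omega>) \<le> norm ((\<Psi> s \<omega>)\<^sup>2 + (\<Psi> t \<omega>)\<^sup>2)"
    proof (rule AE_I2)
      fix \<omega>
      define a where "a = \<Psi> s \<omega>"
      define b where "b = \<Psi> t \<omega>"
      have h: "0 \<le> (\<bar>a\<bar> - \<bar>b\<bar>)^2" by simp
      then have "2*(\<bar>a\<bar>*\<bar>b\<bar>) \<le> \<bar>a\<bar>^2 + \<bar>b\<bar>^2" unfolding power2_diff by linarith
      then have "2 * \<bar>a * b\<bar> \<le> a^2 + b^2" by (simp add: abs_mult)
      then have "2 * \<bar>\<Psi> s \<omega> * \<Psi> t \<omega>\<bar> \<le> (\<Psi> s \<omega>)\<^sup>2 + (\<Psi> t \<omega>)\<^sup>2" unfolding a_def b_def .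
      then show "norm (\<Psi> s \<omega> * \<Psi> t \<omega>) \<le> norm ((\<Psi> s \<omega>)\<^sup>2 + (\<Psi> t \<omega>)\<^sup>2)" by simp
    qed
  qed
  define C where "C = covariance_matrix M (\<lambda>i. \<Psi> (s i))"
  have Cij: "C $ i $ j = \<kappa> (s i - s j)" for i j
    unfolding C_def covariance_matrix_def by (simp add: cov mean)
  have "rank C < CARD(3)" using det det_eq_0_rank unfolding C_def by blast
  then obtain c :: "real^3" where c0: "c \<noteq> 0" and Cc: "C *v c = 0"
    using matrix_nonfull_linear_equations_eq[of C] by auto
  define Z where "Z = (\<lambda>\<omega>. \<Sum>i\<in>UNIV. c$i * \<Psi> (s i) \<omega>)"
  have Zm: "Z \<in> borel_measurable M" unfolding Z_def using meas by simp
  have ZP: "integral\<^sup>L M (\<lambda>\<omega>. Z \<omega> * \<Psi> t \<omega>) = (\<Sum>i\<in>UNIV. c$i * \<kappa> (s i - t))" for t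
  proof -
    have "(\<lambda>\<omega>. Z \<omega> * \<Psi> t \<omega>) = (\<lambda>\<omega>. \<Sum>i\<in>UNIV. c$i * (\<Psi> (s i) \<omega> * \<Psi> t \<omega>))"
      unfolding Z_def by (simp add: sum_distrib_right mult.assoc)
    then show ?thesis using pri by (simp add: integral_sum cov)
  qed
  have ZPi: "integrable M (\<lambda>\<omega>. Z \<omega> * \<Psi> t \<omega>)" for t
  proof -
    have "(\<lambda>\<omega>. Z \<omega> * \<Psi> t \<omega>) = (\<lambda>\<omega>. \<Sum>i\<in>UNIV. c$i * (\<Psi> (s i) \<omega> * \<Psi> t \<omega>))"
      unfolding Z_def by (simp add: sum_distrib_right mult.assoc)
    then show ?thesis using pri by simp
  qed
  have ZPs: "integral\<^sup>L M (\<lambda>\<omega>. Z \<omega> * \<Psi> (s j) \<omega>) = 0" for j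
  proof -
    have "(\<Sum>i\<in>UNIV. c$i * \<kappa> (s i - s j)) = (\<Sum>i\<in>UNIV. C$j$i * c$i)"
    proof (rule sum.cong)
      fix i
      have "\<kappa> (s i - s j) = \<kappa> (s j - s i)" using ev[of "s j - s i"] by simp
      then show "c$i * \<kappa> (s i - s j) = C$j$i * c$i" unfolding Cij by simp
    qed simp
    also have "\<dots> = (C *v c) $ j" unfolding matrix_vector_mult_def by simp
    finally have "(\<Sum>i\<in>UNIV. c$i * \<kappa> (s i - s j)) = (C *v c) $ j" .
    then show ?thesis using ZP Cc by simp
  qed
  have ZZ: "(\<lambda>\<omega>. (Z \<omega>)\<^sup>2) = (\<lambda>\<omega>. \<Sum>j\<in>UNIV. c$j * (Z \<omega> * \<Psi> (s j) \<omega>))"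
  proof
    fix \<omega>
    have "(Z \<omega>)\<^sup>2 = Z \<omega> * (\<Sum>j\<in>UNIV. c$j * \<Psi> (s j) \<omega>)" unfolding Z_def by (simp add: power2_eq_square)
    also have "\<dots> = (\<Sum>j\<in>UNIV. c$j * (Z \<omega> * \<Psi> (s j) \<omega>))" by (simp add: sum_distrib_left mult_ac)
    finally show "(Z \<omega>)\<^sup>2 = (\<Sum>j\<in>UNIV. c$j * (Z \<omega> * \<Psi> (s j) \<omega>))" .
  qed
  have Z2i: "integrable M (\<lambda>\<omega>. (Z \<omega>)\<^sup>2)" unfolding ZZ using ZPi by simp
  have "integral\<^sup>L M (\<lambda>\<omega>. (Z \<omega>)\<^sup>2) = 0" unfolding ZZ using ZPi ZPs by (simp add: integral_sum)
  then have "AE \<omega> in M. (Z \<omega>)\<^sup>2 = 0" using integral_nonneg_eq_0_iff_AE[OF Z2i] by simp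
  then have Z0: "AE \<omega> in M. Z \<omega> * \<Psi> t \<omega> = 0" for t by (rule AE_mp) (auto intro!: AE_I2)
  have "(\<Sum>i\<in>UNIV. c$i * \<kappa> (s i - t)) = 0" for t
  proof -
    have "integral\<^sup>L M (\<lambda>\<omega>. Z \<omega> * \<Psi> t \<omega>) = integral\<^sup>L M (\<lambda>\<omega>. 0)"
      by (rule integral_cong_AE) (use Zm meas Z0 in auto)
    then show ?thesis using ZP by simp
  qed
  moreover have "\<kappa> (t - s i) = \<kappa> (s i - t)" for t i using ev[of "s i - t"] by simp
  ultimately show ?thesis using c0 by (intro exI[of _ c]) simp
qed


lemma det2_zero_collinear:
  fixes p q r :: "real^2"
  assumes "det2 (q - p) (r - p) = 0" and "q \<noteq> p"
  shows "collinear {p, q, r}"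
proof -
  define x where "x = q - p"
  define y where "y = r - p"
  have x0: "x \<noteq> 0" using assms(2) unfolding x_def by simp
  have nx: "(norm x)^2 \<noteq> 0" using x0 by simp
  have D: "x$1 * y$2 - x$2 * y$1 = 0" using assms(1) unfolding x_def y_def det2_def .
  have "y = ((x \<bullet> y) / (norm x)^2) *\<^sub>R x"
  proof -
    have "(norm x)^2 * y$i = (x \<bullet> y) * x$i" for i
    proof -
      have "(norm x)^2 * y$i = (x$1^2 + x$2^2) * y$i" unfolding norm2 ..
      moreover have "(x$1^2 + x$2^2) * y$1 = (x$1*y$1 + x$2*y$2) * x$1"
      proof -
        have "(x$1^2 + x$2^2) * y$1 - (x$1*y$1 + x$2*y$2) * x$1 = - x$2 * (x$1 * y$2 - x$2 * y$1)"
          by (simp add: power2_eq_square algebra_simps)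
        then show ?thesis using D by simp
      qed
      moreover have "(x$1^2 + x$2^2) * y$2 = (x$1*y$1 + x$2*y$2) * x$2"
      proof -
        have "(x$1^2 + x$2^2) * y$2 - (x$1*y$1 + x$2*y$2) * x$2 = x$1 * (x$1 * y$2 - x$2 * y$1)"
          by (simp add: power2_eq_square algebra_simps)
        then show ?thesis using D by simp
      qed
      ultimately show ?thesis using exhaust_2[of i] unfolding inner2 by auto
    qed
    then show ?thesis using nx by (simp add: vec_eq_iff field_simps)
  qed
  then have "collinear {0, x, y}" unfolding collinear_lemma by blast
  moreover have "collinear {q, p, r} \<longleftrightarrow> collinear {0, q - p, r - p}"
    by (rule collinear_3) simp
  ultimately have "collinear {q, p, r}" unfolding x_def y_def by simp
  then show ?thesis by (simp add: insert_commute)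
qed

theorem proposition3p5:
  fixes M :: "'a measure" and \<Psi> :: "real^2 \<Rightarrow> 'a \<Rightarrow> real" and \<kappa> :: "real^2 \<Rightarrow> real"
  assumes "prob_space M"
    and "gaussian_field M \<Psi>"
    and "\<And>s. integral\<^sup>L M (\<Psi> s) = 0"
    and "\<And>s. integral\<^sup>L M (\<lambda>\<omega>. (\<Psi> s \<omega>)\<^sup>2) = 1"
    and "\<And>s t. integral\<^sup>L M (\<lambda>\<omega>. \<Psi> s \<omega> * \<Psi> t \<omega>) = \<kappa> (s - t)"
    and "assumption_A \<kappa>"
  shows "\<exists>\<delta>>0. \<forall>s :: 3 \<Rightarrow> real^2.
           inj s \<and> \<not> collinear (range s) \<and> (\<forall>i j. dist (s i) (s j) < \<delta>) \<longrightarrow>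
           nondegenerate_gaussian_vector M (\<lambda>i. \<Psi> (s i))"
proof -
  note mean = assms(3) and sq = assms(4) and cov = assms(5)
  have meas: "\<And>t. \<Psi> t \<in> borel_measurable M" using assms(2) unfolding gaussian_field_def by blast
  have ev: "\<kappa> (-z) = \<kappa> z" for z
  proof -
    have "\<kappa> (0 - z) = \<kappa> (z - 0)" using cov[of 0 z] cov[of z 0] by (simp add: mult.commute)
    then show ?thesis by simp
  qed
  have k0: "\<kappa> 0 = 1" using cov[of 0 0] sq[of 0] by (simp add: power2_eq_square)
  obtain U where U: "open U" "0 \<in> U" and C6: "Ck_on 6 U \<kappa>"
    and neg: "\<And>v::real^2. norm v = 1 \<Longrightarrow> dir_deriv (dir_deriv \<kappa> v) v 0 < 0"
    using assms(6) unfolding assumption_A_def by blast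
  have C2: "Ck_on 2 U \<kappa>" using Ck_on_le[of 4 2 U \<kappa>] C6 by simp
  have d1: "\<kappa> differentiable_on U" and d2: "\<And>v. dir_deriv \<kappa> v differentiable_on U"
    using C2 by (simp_all add: numeral_2_eq_2)
  define m11 where "m11 = M2 \<kappa> 1 1 0"
  define m12 where "m12 = M2 \<kappa> 1 2 0"
  define m21 where "m21 = M2 \<kappa> 2 1 0"
  define m22 where "m22 = M2 \<kappa> 2 2 0"
  define a where "a = - m11"
  define b where "b = - (m12 + m21)/2"
  define c where "c = - m22"
  have Qeq: "z$1*z$1*m11 + z$1*z$2*m12 + z$2*z$1*m21 + z$2*z$2*m22 = - qf a b c z" for z
    unfolding a_def b_def c_def qf_def by (simp add: power2_eq_square field_simps)
  have qhom: "qf a b c (t *\<^sub>R z) = t^2 * qf a b c z" for t z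
    unfolding qf_def by (simp add: power2_eq_square algebra_simps)
  have qpos: "0 < qf a b c v" if v0: "v \<noteq> 0" for v
  proof -
    define w where "w = (1 / norm v) *\<^sub>R v"
    have nw: "norm w = 1" unfolding w_def using v0 by simp
    have "dir_deriv (dir_deriv \<kappa> w) w 0 = - qf a b c w"
      using second_decomp[OF U d1 d2, of w w] Qeq[of w] unfolding m11_def m12_def m21_def m22_def by simp
    then have "0 < qf a b c w" using neg[OF nw] by simp
    moreover have "qf a b c w = (1/norm v)^2 * qf a b c v" unfolding w_def qhom ..
    ultimately show ?thesis using v0 by (simp add: zero_less_mult_iff)
  qed
  have a0: "0 < a"
  proof -
    have "qf a b c (axis 1 1) = a" unfolding qf_def by (simp add: axis_def)
    then show ?thesis using qpos[of "axis 1 1"] by (simp add: axis_eq_0_iff)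
  qed
  have c0: "0 < c"
  proof -
    have "qf a b c (axis 2 1) = c" unfolding qf_def by (simp add: axis_def)
    then show ?thesis using qpos[of "axis 2 1"] by (simp add: axis_eq_0_iff)
  qed
  have d0: "0 < a*c - b^2"
  proof -
    define w :: "real^2" where "w = (\<chi> i. if i = 1 then - b else a)"
    have w1: "w$1 = -b" and w2: "w$2 = a" unfolding w_def by simp_all
    have w0: "w \<noteq> 0"
    proof
      assume "w = 0"
      then have "w$2 = 0" by simp
      then show False using a0 w2 by simp
    qed
    have "qf a b c w = a * (a*c - b^2)" unfolding qf_def w1 w2 by (simp add: power2_eq_square algebra_simps)
    then have "0 < a * (a*c - b^2)" using qpos[OF w0] by simp
    then show ?thesis using a0 by (simp add: zero_less_mult_iff)
  qed
  define \<Sigma> where "\<Sigma> = \<bar>a\<bar> + 2*\<bar>b\<bar> + \<bar>c\<bar>"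
  define Cst where "Cst = 4*(\<Sigma>/2+1) + 2*\<Sigma> + 4*(\<Sigma>/2+1)^3 + (\<Sigma>/2+1)^4
           + (6 + (\<Sigma>/2+1)^2) * (12 + 2*(\<Sigma>/2+1)^2 + 2*\<Sigma>)"
  define d where "d = a*c - b^2"
  have Sg0: "0 \<le> \<Sigma>" unfolding \<Sigma>_def by simp
  have Cst0: "0 \<le> Cst" unfolding Cst_def using Sg0 by simp
  define \<epsilon> where "\<epsilon> = min (1/2) (min (d/(16*(Cst+1))) (min (d/(4*(a+c))) (1/(\<Sigma>+1))))"
  have dpos: "0 < d" using d0 unfolding d_def .
  have ep: "0 < \<epsilon>" unfolding \<epsilon>_def using dpos Cst0 a0 c0 Sg0 by simp
  have ep1: "\<epsilon> \<le> 1/2" unfolding \<epsilon>_def by (rule min.cobounded1)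
  have etal: "\<epsilon> * (a + c) < d/2"
  proof -
    have "\<epsilon> \<le> d/(4*(a+c))" unfolding \<epsilon>_def by simp
    then have "\<epsilon> * (a+c) \<le> d/(4*(a+c)) * (a+c)" using a0 c0 by (intro mult_right_mono) auto
    also have "\<dots> = d/4" using a0 c0 by (simp add: field_simps)
    finally show ?thesis using dpos by simp
  qed
  have rhoS: "\<epsilon> * (\<Sigma>/2 + 1) < 2"
  proof -
    have "\<epsilon> \<le> 1/(\<Sigma>+1)" unfolding \<epsilon>_def by simp
    then have "\<epsilon> * (\<Sigma>/2 + 1) \<le> 1/(\<Sigma>+1) * (\<Sigma>/2 + 1)" using Sg0 by (intro mult_right_mono) auto
    also have "\<dots> \<le> 1" using Sg0 by (simp add: field_simps)
    finally show ?thesis by simp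
  qed
  have small: "(\<epsilon> + \<epsilon>) * Cst < 3/16 * d"
  proof -
    have "\<epsilon> \<le> d/(16*(Cst+1))" unfolding \<epsilon>_def by simp
    then have "(\<epsilon> + \<epsilon>) * Cst \<le> (2 * (d/(16*(Cst+1)))) * Cst" using Cst0 by (intro mult_right_mono) auto
    also have "\<dots> = d/8 * (Cst / (Cst+1))" using Cst0 by (simp add: field_simps)
    also have "\<dots> < d/8 * 1" using dpos Cst0 by (intro mult_strict_left_mono) auto
    finally show ?thesis using dpos by simp
  qed
  obtain r where r0: "r > 0" and tay0: "\<forall>z. norm z < r \<longrightarrow> \<bar>\<kappa> z - 1 - (z$1*z$1*M2 \<kappa> 1 1 0 + z$1*z$2*M2 \<kappa> 1 2 0
            + z$2*z$1*M2 \<kappa> 2 1 0 + z$2*z$2*M2 \<kappa> 2 2 0)/2\<bar> \<le> \<epsilon> * (norm z)^2"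
    using taylor2[OF U C2 ev k0 ep] by blast
  have tay: "\<bar>\<kappa> z - 1 + qf a b c z / 2\<bar> \<le> \<epsilon> * (norm z)^2" if "norm z < r" for z
  proof -
    have "\<bar>\<kappa> z - 1 - (- qf a b c z)/2\<bar> \<le> \<epsilon> * (norm z)^2"
      using tay0 that Qeq[of z] unfolding m11_def m12_def m21_def m22_def by auto
    then show ?thesis by simp
  qed
  define \<delta> where "\<delta> = min (r/3) (sqrt (\<epsilon>/2))"
  have \<delta>0: "0 < \<delta>" unfolding \<delta>_def using r0 ep by simp
  have nsq: "(norm w)^2 < \<epsilon>/2" if "norm w < \<delta>" for w :: "real^2"
  proof -
    have "norm w < sqrt (\<epsilon>/2)" using that unfolding \<delta>_def by simp
    then have "(norm w)^2 < (sqrt (\<epsilon>/2))^2" by (intro power_strict_mono) auto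
    then show ?thesis using ep by simp
  qed
  show ?thesis
  proof (intro exI[of _ \<delta>] conjI allI impI \<delta>0)
    fix s :: "3 \<Rightarrow> real^2"
    assume hs: "inj s \<and> \<not> collinear (range s) \<and> (\<forall>i j. dist (s i) (s j) < \<delta>)"
    show "nondegenerate_gaussian_vector M (\<lambda>i. \<Psi> (s i))"
      unfolding nondegenerate_gaussian_vector_def
    proof
      assume det: "det (covariance_matrix M (\<lambda>i. \<Psi> (s i))) = 0"
      obtain cv :: "real^3" where cv0: "cv \<noteq> 0" and rel: "\<And>t. (\<Sum>i\<in>UNIV. cv$i * \<kappa> (t - s i)) = 0"
        using degen_relation[OF meas sq cov mean ev det] by blast
      have rel3: "cv$1 * \<kappa> (t - s 1) + cv$2 * \<kappa> (t - s 2) + cv$3 * \<kappa> (t - s 3) = 0" for t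
        using rel[of t] by (simp add: sum_3)
      define x where "x = s 2 - s 1"
      define y where "y = s 3 - s 1"
      have A: "cv$1 * \<kappa> t + cv$2 * \<kappa> (t + x) + cv$3 * \<kappa> (t + y) = 0" for t
      proof -
        have e: "s 1 - t - s 1 = - t" "s 1 - t - s 2 = - (t + x)" "s 1 - t - s 3 = - (t + y)"
          unfolding x_def y_def by (simp_all add: algebra_simps)
        show ?thesis using rel3[of "s 1 - t"] unfolding e ev .
      qed
      have B: "cv$1 * \<kappa> t + cv$2 * \<kappa> (t - x) + cv$3 * \<kappa> (t - y) = 0" for t
      proof -
        have e: "t + s 1 - s 1 = t" "t + s 1 - s 2 = t - x" "t + s 1 - s 3 = t - y"
          unfolding x_def y_def by (simp_all add: algebra_simps)
        show ?thesis using rel3[of "t + s 1"] unfolding e .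
      qed
      have cne: "\<not> (cv$1 = 0 \<and> cv$2 = 0 \<and> cv$3 = 0)"
        using cv0 by (auto simp: vec_eq_iff forall_3)
      have injs: "inj s" using hs by blast
      have i3: "(1::3) \<noteq> 2" "(2::3) \<noteq> 3" "(1::3) \<noteq> 3" by simp_all
      have inj: "s 1 \<noteq> s 2" "s 2 \<noteq> s 3" "s 1 \<noteq> s 3"
        using i3 by (simp_all add: inj_eq[OF injs])
      have rng: "range s = {s 1, s 2, s 3}" unfolding UNIV_3 by simp
      have D: "det2 x y \<noteq> 0"
      proof
        assume "det2 x y = 0"
        then have "collinear {s 1, s 2, s 3}" using det2_zero_collinear[of "s 2" "s 1" "s 3"] inj
          unfolding x_def y_def by auto
        then show False using hs rng by simp
      qed
      have xy: "x \<noteq> y" using inj unfolding x_def y_def by auto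
      have nx: "norm x < \<delta>" "norm y < \<delta>" "norm (y - x) < \<delta>"
        using hs unfolding x_def y_def dist_norm by (auto simp: algebra_simps)
      have nx3: "norm x < r/3" "norm y < r/3" "norm (y - x) < r/3"
        using nx unfolding \<delta>_def by auto
      have nx2: "(norm x)^2 \<le> 4/5*\<epsilon>" "(norm y)^2 \<le> 4/5*\<epsilon>" "(norm (y - x))^2 \<le> \<epsilon>"
        using nsq[OF nx(1)] nsq[OF nx(2)] nsq[OF nx(3)] ep by auto
      show False
        by (rule core_contra[of \<kappa> r a b c \<epsilon> \<epsilon> x y "cv$1" "cv$2" "cv$3",
              OF ev k0 tay a0 c0 d0 ep _ _ _ _ _ D xy nx3 nx2 A B cne])
           (use ep1 etal rhoS small in \<open>auto simp: d_def \<Sigma>_def Cst_def\<close>)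
    qed
  qed
qed

end
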